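(* Let $\epsilon\in(0,1]^{\mathbb{N}}$. The family of measures $\{\mu_{\mathrm{can}}|_{\pi^{-1}(\omega)}\}_{\omega\in\beta\mathbb{N}}$ on $\mathbb{P}^{1,an}_{A^\epsilon}$ is continuous, i.e. $\omega\mapsto\mu_{\mathrm{can}}|_{\pi^{-1}(\omega)}$ is continuous for the weak-$*$ topology of measures on $\mathbb{P}^{1,an}_{A^\epsilon}$.
   Context: $A^\epsilon=\{(a_n)\in\mathbb{C}^{\mathbb{N}}:\sup_n|a_n|^{\epsilon_n}<\infty\}$ with norm $\sup_n|a_n|^{\epsilon_n}$; $\beta\mathbb{N}$ the set of ultrafilters on $\mathbb{N}$, identified with the Berkovich spectrum of $A^\epsilon$ via $\omega\mapsto(a\mapsto\lim_\omega|a_n|^{\epsilon_n})$; $\mathscr{H}(\omega)$ the completed residue field at $\omega$, which is either isometric to $(\mathbb{C},|\cdot|^e)$ for some $e\in(0,1]$ or non-Archimedean. $\mathbb{P}^{1,an}_{A^\epsilon}$ is the Berkovich projective line over $A^\epsilon$ with projection $\pi$ onto $\beta\mathbb{N}$ and $\pi^{-1}(\omega)\simeq\mathbb{P}^{1,an}_{\mathscr{H}(\omega)}$. On $\mathbb{P}^{1,an}_k$, $\mu_{\mathrm{can}}$ is the Haar probability measure on the unit circle $\{|z|=1\}$ if $k$ is Archimedean, and the Dirac mass at the Gauss point (the seminorm $P\mapsto\max_{|z|\le1}|P(z)|$) if $k$ is non-Archimedean. *)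

theory Defs
  imports "HOL-Analysis.Analysis" "HOL-Probability.Probability"
          "HOL-Library.Function_Algebras" "HOL-Computational_Algebra.Polynomial"
begin

text \<open>Elements of the Banach ring A^eps are complex sequences; ring operations on
  nat => complex are pointwise (Function_Algebras).\<close>

type_synonym seq = "nat \<Rightarrow> complex"
type_synonym seminorm = "seq poly \<Rightarrow> real"
type_synonym P1point = "bool \<times> seminorm"

definition Aeps :: "(nat \<Rightarrow> real) \<Rightarrow> seq set" where
  "Aeps \<epsilon> = {a. bdd_above (range (\<lambda>n. cmod (a n) powr \<epsilon> n))}"

definition normA :: "(nat \<Rightarrow> real) \<Rightarrow> seq \<Rightarrow> real" where
  "normA \<epsilon> a = (SUP n. cmod (a n) powr \<epsilon> n)"

definition Apoly :: "(nat \<Rightarrow> real) \<Rightarrow> seq poly set" where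
  "Apoly \<epsilon> = {P. \<forall>k. coeff P k \<in> Aeps \<epsilon>}"

text \<open>Points of the Berkovich affine line A^{1,an}_{A^eps}: multiplicative seminorms on
  A^eps[T] bounded on A^eps by the norm (extended by 0 outside A^eps[T]).\<close>
definition Berk_A1 :: "(nat \<Rightarrow> real) \<Rightarrow> seminorm set" where
  "Berk_A1 \<epsilon> = {x.
     (\<forall>P. P \<notin> Apoly \<epsilon> \<longrightarrow> x P = 0) \<and>
     (\<forall>P\<in>Apoly \<epsilon>. 0 \<le> x P) \<and> x 0 = 0 \<and> x 1 = 1 \<and>
     (\<forall>P\<in>Apoly \<epsilon>. \<forall>Q\<in>Apoly \<epsilon>. x (P + Q) \<le> x P + x Q) \<and>
     (\<forall>P\<in>Apoly \<epsilon>. \<forall>Q\<in>Apoly \<epsilon>. x (P * Q) = x P * x Q) \<and>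
     (\<forall>a\<in>Aeps \<epsilon>. x [:a:] \<le> normA \<epsilon> a)}"

definition Disc :: "(nat \<Rightarrow> real) \<Rightarrow> seminorm set" where
  "Disc \<epsilon> = {x \<in> Berk_A1 \<epsilon>. x [:0, 1:] \<le> 1}"

text \<open>P^{1,an} is glued from the disc {|T|<=1} (tag False, coordinate T) and the disc
  {|S|<=1} (coordinate S = 1/T); points with |S| < 1 are stored with tag True, points with
  |S| = 1 are identified with the point of the first disc given by P |-> |reflect P|.\<close>
definition flipS :: "(nat \<Rightarrow> real) \<Rightarrow> seminorm \<Rightarrow> seminorm" where
  "flipS \<epsilon> y = (\<lambda>P. if P \<in> Apoly \<epsilon> then y (reflect_poly P) else 0)"

definition chart0 :: "seminorm \<Rightarrow> P1point" where
  "chart0 x = (False, x)"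

definition chartInf :: "(nat \<Rightarrow> real) \<Rightarrow> seminorm \<Rightarrow> P1point" where
  "chartInf \<epsilon> y = (if y [:0, 1:] < 1 then (True, y) else (False, flipS \<epsilon> y))"

definition P1 :: "(nat \<Rightarrow> real) \<Rightarrow> P1point set" where
  "P1 \<epsilon> = chart0 ` Disc \<epsilon> \<union> chartInf \<epsilon> ` Disc \<epsilon>"

text \<open>Each disc carries the (Berkovich) topology of pointwise convergence, i.e. the
  subspace topology of the product topology on seq poly => real; P^{1,an} carries the
  glued topology (the two closed discs form a finite closed cover).\<close>
definition P1top :: "(nat \<Rightarrow> real) \<Rightarrow> P1point topology" where
  "P1top \<epsilon> = topology (\<lambda>U. U \<subseteq> P1 \<epsilon> \<and>
      openin (subtopology euclidean (Disc \<epsilon>)) {x \<in> Disc \<epsilon>. chart0 x \<in> U} \<and>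
      openin (subtopology euclidean (Disc \<epsilon>)) {y \<in> Disc \<epsilon>. chartInf \<epsilon> y \<in> U})"

text \<open>Stone-Cech compactification beta N: ultrafilters on N with the Stone topology.\<close>
definition ultrafilter_on_nat :: "nat filter \<Rightarrow> bool" where
  "ultrafilter_on_nat \<omega> \<longleftrightarrow> \<omega> \<noteq> bot \<and> (\<forall>A. eventually (\<lambda>n. n \<in> A) \<omega> \<or> eventually (\<lambda>n. n \<notin> A) \<omega>)"

definition betaN :: "nat filter set" where
  "betaN = {\<omega>. ultrafilter_on_nat \<omega>}"

definition betaN_top :: "nat filter topology" where
  "betaN_top = topology (\<lambda>U. U \<subseteq> betaN \<and>
      (\<forall>\<omega>\<in>U. \<exists>A. eventually (\<lambda>n. n \<in> A) \<omega> \<and> {\<nu> \<in> betaN. eventually (\<lambda>n. n \<in> A) \<nu>} \<subseteq> U))"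

definition borel_on :: "'a topology \<Rightarrow> 'a measure" where
  "borel_on T = sigma (topspace T) {U. openin T U}"

definition absw :: "(nat \<Rightarrow> real) \<Rightarrow> nat filter \<Rightarrow> seq \<Rightarrow> real" where
  "absw \<epsilon> \<omega> a = Lim \<omega> (\<lambda>n. cmod (a n) powr \<epsilon> n)"

text \<open>The point of the fibre over omega given by evaluation at z (an element of A^eps,
  mapped to H(omega)).\<close>
definition evalpt :: "(nat \<Rightarrow> real) \<Rightarrow> nat filter \<Rightarrow> seq \<Rightarrow> seminorm" where
  "evalpt \<epsilon> \<omega> z = (\<lambda>P. if P \<in> Apoly \<epsilon> then absw \<epsilon> \<omega> (poly P z) else 0)"

definition gauss :: "(nat \<Rightarrow> real) \<Rightarrow> nat filter \<Rightarrow> seminorm" where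
  "gauss \<epsilon> \<omega> = (\<lambda>P. if P \<in> Apoly \<epsilon>
      then (SUP z\<in>{z \<in> Aeps \<epsilon>. absw \<epsilon> \<omega> z \<le> 1}. absw \<epsilon> \<omega> (poly P z)) else 0)"

text \<open>H(omega) is Archimedean iff |2| > 1.\<close>
definition archimedean_at :: "(nat \<Rightarrow> real) \<Rightarrow> nat filter \<Rightarrow> bool" where
  "archimedean_at \<epsilon> \<omega> \<longleftrightarrow> absw \<epsilon> \<omega> (\<lambda>n. 2) > 1"

text \<open>mu_can on the fibre over omega, as a Borel measure on P^{1,an}_{A^eps}:
  Haar probability on the unit circle (Archimedean case), Dirac mass at the Gauss point
  (non-Archimedean case).\<close>
definition mu_can_fibre :: "(nat \<Rightarrow> real) \<Rightarrow> nat filter \<Rightarrow> P1point measure" where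
  "mu_can_fibre \<epsilon> \<omega> =
     (if archimedean_at \<epsilon> \<omega>
      then distr (uniform_measure lborel {0..2*pi}) (borel_on (P1top \<epsilon>))
             (\<lambda>\<theta>. chart0 (evalpt \<epsilon> \<omega> (\<lambda>n. cis \<theta>)))
      else return (borel_on (P1top \<epsilon>)) (chart0 (gauss \<epsilon> \<omega>)))"

text \<open>Weak-* topology on measures on P^{1,an}: initial topology of mu |-> int f dmu,
  f ranging over continuous real functions on P^{1,an}.\<close>
definition weak_star_top :: "(nat \<Rightarrow> real) \<Rightarrow> P1point measure topology" where
  "weak_star_top \<epsilon> = topology_generated_by
     {{\<mu>. (\<integral>p. f p \<partial>\<mu>) \<in> U} | f U. continuous_map (P1top \<epsilon>) euclideanreal f \<and> open U}"

end

theory Submission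
  imports Defs "HOL-Computational_Algebra.Fundamental_Theorem_Algebra"
begin


lemma ultra_ev:
  assumes "ultrafilter_on_nat \<omega>"
  shows "eventually P \<omega> \<or> eventually (\<lambda>n. \<not> P n) \<omega>"
proof -
  have "eventually (\<lambda>n. n \<in> {n. P n}) \<omega> \<or> eventually (\<lambda>n. n \<notin> {n. P n}) \<omega>"
    using assms unfolding ultrafilter_on_nat_def by blast
  then show ?thesis by simp
qed

lemma ultra_nbot: "ultrafilter_on_nat \<omega> \<Longrightarrow> \<omega> \<noteq> bot"
  unfolding ultrafilter_on_nat_def by auto

lemma ultra_lim:
  fixes f :: "nat \<Rightarrow> real"
  assumes U: "ultrafilter_on_nat \<omega>" and B: "\<And>n. a \<le> f n" "\<And>n. f n \<le> b"
  shows "(f \<longlongrightarrow> Lim \<omega> f) \<omega>"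
proof -
  have nb: "\<omega> \<noteq> bot" using U ultra_nbot by auto
  define S where "S = {x. eventually (\<lambda>n. x \<le> f n) \<omega>}"
  have aS: "a \<in> S" using B unfolding S_def by auto
  have Sb: "x \<le> b" if "x \<in> S" for x
  proof (rule ccontr)
    assume "\<not> x \<le> b"
    have "eventually (\<lambda>n. x \<le> f n) \<omega>" using that unfolding S_def by simp
    then have "eventually (\<lambda>n. False) \<omega>"
    proof (rule eventually_mono)
      fix n assume "x \<le> f n" then show False using B(2)[of n] \<open>\<not> x \<le> b\<close> by linarith
    qed
    then show False using nb by (simp add: eventually_False)
  qed
  define L where "L = Sup S"
  have bdd: "bdd_above S" using Sb by (auto simp: bdd_above_def)
  have "(f \<longlongrightarrow> L) \<omega>"
  proof (rule order_tendstoI)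
    fix y assume "y < L"
    then obtain x where "x \<in> S" "y < x" using aS bdd unfolding L_def
      using less_cSup_iff[of S y] by blast
    then show "eventually (\<lambda>n. y < f n) \<omega>" unfolding S_def
      by (auto elim: eventually_mono)
  next
    fix y assume "L < y"
    have "\<not> eventually (\<lambda>n. y \<le> f n) \<omega>"
    proof
      assume "eventually (\<lambda>n. y \<le> f n) \<omega>"
      then have "y \<in> S" unfolding S_def by auto
      then have "y \<le> L" unfolding L_def using bdd by (simp add: cSup_upper)
      then show False using \<open>L < y\<close> by simp
    qed
    then show "eventually (\<lambda>n. f n < y) \<omega>" using ultra_ev[OF U, of "\<lambda>n. y \<le> f n"]
      by (auto simp: not_le)
  qed
  moreover have "Lim \<omega> f = L" using calculation nb by (simp add: tendsto_Lim)
  ultimately show ?thesis by simp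
qed

lemma ultra_principal: "ultrafilter_on_nat (principal {n})"
  unfolding ultrafilter_on_nat_def by (auto simp: eventually_principal principal_eq_bot_iff)

lemma Lim_principal: "Lim (principal {n}) f = (f n :: real)"
  by (rule tendsto_Lim) (auto simp: tendsto_principal_singleton principal_eq_bot_iff)

lemma powr_subadd:
  fixes s t e :: real
  assumes "0 \<le> s" "0 \<le> t" "0 < e" "e \<le> 1"
  shows "(s + t) powr e \<le> s powr e + t powr e"
proof (cases "s + t = 0")
  case True then show ?thesis using assms by auto
next
  case False
  then have st: "0 < s + t" using assms by auto
  define u where "u = s / (s+t)"
  define v where "v = t / (s+t)"
  have u01: "0 \<le> u" "u \<le> 1" using assms st by (auto simp: u_def)
  have v01: "0 \<le> v" "v \<le> 1" using assms st by (auto simp: v_def)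
  have uv: "u + v = 1" using st unfolding u_def v_def by (simp add: add_divide_distrib[symmetric])
  have "u \<le> u powr e"
  proof (cases "u = 0")
    case False
    then have "u powr 1 \<le> u powr e" using u01 assms
      by (intro powr_mono') auto
    then show ?thesis using False u01 by simp
  qed auto
  moreover have "v \<le> v powr e"
  proof (cases "v = 0")
    case False
    then have "v powr 1 \<le> v powr e" using v01 assms
      by (intro powr_mono') auto
    then show ?thesis using False v01 by simp
  qed auto
  ultimately have "1 \<le> u powr e + v powr e" using uv by linarith
  then have "(s+t) powr e * 1 \<le> (s+t) powr e * (u powr e + v powr e)"
    by (intro mult_left_mono) auto
  also have "\<dots> = ((s+t) * u) powr e + ((s+t) * v) powr e"
    using u01 v01 st by (simp add: powr_mult distrib_left)
  also have "\<dots> = s powr e + t powr e" using st by (simp add: u_def v_def)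
  finally show ?thesis by simp
qed

lemma powr_diff_le:
  fixes s t e :: real
  assumes "0 \<le> s" "0 \<le> t" "0 < e" "e \<le> 1"
  shows "\<bar>s powr e - t powr e\<bar> \<le> \<bar>s - t\<bar> powr e"
proof -
  have 1: "s powr e \<le> t powr e + \<bar>s - t\<bar> powr e"
  proof -
    have "s powr e \<le> (t + \<bar>s - t\<bar>) powr e" using assms by (intro powr_mono2) auto
    also have "\<dots> \<le> t powr e + \<bar>s - t\<bar> powr e" using assms by (intro powr_subadd) auto
    finally show ?thesis .
  qed
  have 2: "t powr e \<le> s powr e + \<bar>s - t\<bar> powr e"
  proof -
    have "t powr e \<le> (s + \<bar>s - t\<bar>) powr e" using assms by (intro powr_mono2) auto
    also have "\<dots> \<le> s powr e + \<bar>s - t\<bar> powr e" using assms by (intro powr_subadd) auto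
    finally show ?thesis .
  qed
  show ?thesis using 1 2 by linarith
qed

lemma power_fun_apply: "((z::nat \<Rightarrow> complex) ^ k) n = (z n) ^ k"
  by (induction k) auto

definition cp :: "seq poly \<Rightarrow> nat \<Rightarrow> complex poly" where
  "cp P n = map_poly (\<lambda>a. a n) P"

lemma coeff_cp: "coeff (cp P n) k = coeff P k n"
  unfolding cp_def by (simp add: coeff_map_poly)

lemma degree_cp: "degree (cp P n) \<le> degree P"
  by (rule degree_le) (simp add: coeff_cp coeff_eq_0)

lemma poly_cp: "poly P z n = poly (cp P n) (z n)"
proof (induction P)
  case (pCons a p)
  then show ?case unfolding cp_def by (simp add: map_poly_pCons)
qed (simp add: cp_def)

lemma cp_eq_iff_poly: "(\<forall>w. poly (p::complex poly) w = poly q w) \<Longrightarrow> p = q"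
  using poly_eq_poly_eq_iff[of p q] by blast

lemma cp_mult: "cp (P * Q) n = cp P n * cp Q n"
proof (rule cp_eq_iff_poly, intro allI)
  fix w show "poly (cp (P * Q) n) w = poly (cp P n * cp Q n) w"
    using poly_cp[of "P*Q" "\<lambda>_. w" n] poly_cp[of P "\<lambda>_. w" n] poly_cp[of Q "\<lambda>_. w" n]
    by simp
qed

lemma cp_add: "cp (P + Q) n = cp P n + cp Q n"
proof (rule cp_eq_iff_poly, intro allI)
  fix w show "poly (cp (P + Q) n) w = poly (cp P n + cp Q n) w"
    using poly_cp[of "P+Q" "\<lambda>_. w" n] poly_cp[of P "\<lambda>_. w" n] poly_cp[of Q "\<lambda>_. w" n]
    by simp
qed

lemma cp_one: "cp 1 n = 1"
proof (rule cp_eq_iff_poly, intro allI)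
  fix w show "poly (cp 1 n) w = poly 1 w"
    using poly_cp[of 1 "\<lambda>_. w" n] by simp
qed

lemma cp_zero: "cp 0 n = 0"
  by (simp add: cp_def)

lemma cp_const: "cp [:a:] n = [:a n:]"
proof (rule cp_eq_iff_poly, intro allI)
  fix w show "poly (cp [:a:] n) w = poly [:a n:] w"
    using poly_cp[of "[:a:]" "\<lambda>_. w" n] by simp
qed

lemma cp_X: "cp [:0, 1:] n = [:0, 1:]"
proof (rule cp_eq_iff_poly, intro allI)
  fix w show "poly (cp [:0, 1:] n) w = poly [:0, 1:] w"
    using poly_cp[of "[:0, 1:]" "\<lambda>_. w" n] by simp
qed


definition N1 :: "complex poly \<Rightarrow> real" where
  "N1 p = (\<Sum>k\<le>degree p. cmod (coeff p k))"

lemma N1_ext: "degree p \<le> M \<Longrightarrow> N1 p = (\<Sum>k\<le>M. cmod (coeff p k))"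
  unfolding N1_def
  by (rule sum.mono_neutral_left) (auto simp: coeff_eq_0)

lemma N1_nonneg: "0 \<le> N1 p"
  unfolding N1_def by (auto intro: sum_nonneg)

lemma N1_0 [simp]: "N1 0 = 0" by (simp add: N1_def)
lemma N1_const [simp]: "N1 [:c:] = cmod c" by (simp add: N1_def)
lemma N1_1 [simp]: "N1 1 = 1" by (simp add: N1_def)

lemma N1_add: "N1 (p + q) \<le> N1 p + N1 q"
proof -
  define M where "M = max (degree p) (degree q)"
  have "degree (p + q) \<le> M" unfolding M_def by (rule degree_add_le) auto
  then have "N1 (p + q) = (\<Sum>k\<le>M. cmod (coeff p k + coeff q k))" by (simp add: N1_ext)
  also have "\<dots> \<le> (\<Sum>k\<le>M. cmod (coeff p k) + cmod (coeff q k))"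
    by (intro sum_mono norm_triangle_ineq)
  also have "\<dots> = N1 p + N1 q"
    using N1_ext[of p M] N1_ext[of q M] by (simp add: sum.distrib M_def)
  finally show ?thesis .
qed

lemma N1_smult: "N1 (smult c p) = cmod c * N1 p"
proof -
  have "N1 (smult c p) = (\<Sum>k\<le>degree p. cmod (coeff (smult c p) k))"
    by (rule N1_ext) (simp add: degree_smult_le)
  also have "\<dots> = (\<Sum>k\<le>degree p. cmod (c * coeff p k))" by simp
  also have "\<dots> = cmod c * N1 p" by (simp add: N1_def norm_mult sum_distrib_left)
  finally show ?thesis .
qed

lemma N1_pCons: "N1 (pCons a p) = cmod a + N1 p"
proof -
  have "N1 (pCons a p) = (\<Sum>k\<le>Suc (degree p). cmod (coeff (pCons a p) k))"
    by (rule N1_ext) simp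
  also have "\<dots> = cmod a + (\<Sum>k\<le>degree p. cmod (coeff p k))"
    unfolding sum.atMost_Suc_shift by simp
  finally show ?thesis by (simp add: N1_def)
qed

lemma N1_mult: "N1 (p * q) \<le> N1 p * N1 q"
proof (induction p)
  case 0 then show ?case by simp
next
  case (pCons a p)
  have "N1 (pCons a p * q) = N1 (smult a q + pCons 0 (p * q))" by simp
  also have "\<dots> \<le> N1 (smult a q) + N1 (pCons 0 (p * q))" by (rule N1_add)
  also have "\<dots> = cmod a * N1 q + N1 (p * q)" by (simp add: N1_smult N1_pCons)
  also have "\<dots> \<le> cmod a * N1 q + N1 p * N1 q" using pCons.IH by simp
  also have "\<dots> = N1 (pCons a p) * N1 q" by (simp add: N1_pCons distrib_right)
  finally show ?case .
qed

lemma N1_lin: "N1 ([:-z, 1:] * q) \<le> (1 + cmod z) * N1 q"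
proof -
  have "N1 ([:-z, 1:] * q) \<le> N1 [:-z, 1:] * N1 q" by (rule N1_mult)
  moreover have "N1 [:-z, 1:] = 1 + cmod z" by (simp add: N1_pCons)
  ultimately show ?thesis by simp
qed

lemma poly_le_N1: assumes "cmod w \<le> 1" shows "cmod (poly p w) \<le> N1 p"
proof -
  have "cmod (poly p w) = cmod (\<Sum>k\<le>degree p. coeff p k * w ^ k)" by (simp add: poly_altdef)
  also have "\<dots> \<le> (\<Sum>k\<le>degree p. cmod (coeff p k * w ^ k))" by (rule norm_sum)
  also have "\<dots> \<le> (\<Sum>k\<le>degree p. cmod (coeff p k))"
  proof (intro sum_mono)
    fix k
    have "cmod (w ^ k) \<le> 1" using assms by (simp add: norm_power power_le_one)
    then show "cmod (coeff p k * w ^ k) \<le> cmod (coeff p k)"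
      by (simp add: norm_mult mult_left_le)
  qed
  finally show ?thesis by (simp add: N1_def)
qed

lemma N1_ge_coeff: "cmod (coeff p k) \<le> N1 p"
proof (cases "k \<le> degree p")
  case True
  then show ?thesis unfolding N1_def
    by (intro member_le_sum) auto
next
  case False then show ?thesis by (simp add: coeff_eq_0 N1_nonneg)
qed

lemma N1_le_coeffs: "N1 p \<le> real (Suc (degree p)) * Max ((\<lambda>k. cmod (coeff p k)) ` {..degree p})"
proof -
  have "N1 p \<le> (\<Sum>k\<le>degree p. Max ((\<lambda>k. cmod (coeff p k)) ` {..degree p}))"
    unfolding N1_def by (intro sum_mono Max_ge) auto
  then show ?thesis by simp
qed

lemma dist_root_bound:
  assumes "cmod w = 1" "0 < \<delta>" "\<delta> \<le> 1" "\<delta> \<le> cmod (w - z)"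
  shows "(\<delta>/3) * (1 + cmod z) \<le> cmod (w - z)"
proof (cases "cmod z \<le> 2")
  case True
  then have "(\<delta>/3) * (1 + cmod z) \<le> (\<delta>/3) * 3" using assms by (intro mult_left_mono) auto
  then have "(\<delta>/3) * (1 + cmod z) \<le> \<delta>" by simp
  then show ?thesis using assms by linarith
next
  case False
  have "cmod z - cmod w \<le> cmod (w - z)" by (metis norm_minus_commute norm_triangle_ineq2)
  moreover have "(\<delta>/3) * (1 + cmod z) \<le> (1/3) * (1 + cmod z)"
    using assms by (intro mult_right_mono) auto
  moreover have "(1/3) * (1 + cmod z) \<le> cmod z - 1" using False by simp
  ultimately show ?thesis using assms by linarith
qed

lemma lower_bound_poly:
  assumes "cmod w = 1" "0 < \<delta>" "\<delta> \<le> 1"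
  shows "degree p \<le> D \<Longrightarrow> (\<forall>z. poly p z = 0 \<longrightarrow> \<delta> \<le> cmod (w - z)) \<Longrightarrow>
    (\<delta>/3) ^ D * N1 p \<le> cmod (poly p w)"
proof (induction D arbitrary: p)
  case 0
  then have "p = [:coeff p 0:]" by (metis degree_0_id le_zero_eq)
  then show ?case by (metis N1_const mult_1 poly_const_conv power_0 order_refl)
next
  case (Suc D)
  show ?case
  proof (cases "degree p = 0")
    case True
    then have p: "p = [:coeff p 0:]" by (metis degree_0_id)
    have "(\<delta>/3) ^ Suc D \<le> 1" using assms by (intro power_le_one) auto
    then have "(\<delta>/3) ^ Suc D * N1 p \<le> 1 * N1 p" by (intro mult_right_mono N1_nonneg)
    also have "\<dots> = cmod (poly p w)" by (subst (1 2) p) simp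
    finally show ?thesis by simp
  next
    case False
    then obtain z where z: "poly p z = 0"
      using fundamental_theorem_of_algebra[of p] constant_degree[of p] False by blast
    then have "[:-z, 1:] dvd p" by (simp add: poly_eq_0_iff_dvd)
    then obtain q where pq: "p = [:-z, 1:] * q" by (erule dvdE)
    have q0: "q \<noteq> 0" using pq False by auto
    have "degree ([:-z,1:] * q) = degree [:-z,1:] + degree q" by (rule degree_mult_eq) (use q0 in auto)
    then have dq: "degree p = Suc (degree q)" using pq by simp
    have "degree q \<le> D" using dq Suc.prems by simp
    moreover have "\<forall>y. poly q y = 0 \<longrightarrow> \<delta> \<le> cmod (w - y)" using Suc.prems(2) pq by auto
    ultimately have IH: "(\<delta>/3) ^ D * N1 q \<le> cmod (poly q w)" using Suc.IH by blast
    have wz: "(\<delta>/3) * (1 + cmod z) \<le> cmod (w - z)"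
      using dist_root_bound[OF assms] Suc.prems(2) z by blast
    have "(\<delta>/3) ^ Suc D * N1 p \<le> (\<delta>/3) ^ Suc D * ((1 + cmod z) * N1 q)"
      using N1_lin[of z q] pq assms by (intro mult_left_mono) auto
    also have "\<dots> = ((\<delta>/3) * (1 + cmod z)) * ((\<delta>/3) ^ D * N1 q)" by (simp add: algebra_simps)
    also have "\<dots> \<le> cmod (w - z) * cmod (poly q w)"
      using wz IH assms by (intro mult_mono) (auto intro!: mult_nonneg_nonneg N1_nonneg)
    also have "\<dots> = cmod (poly p w)" unfolding pq poly_mult norm_mult by simp
    finally show ?thesis .
  qed
qed


definition Um :: "real measure" where "Um = uniform_measure lborel {0..2*pi}"

lemma Um_prob: "prob_space Um"
  unfolding Um_def by (intro prob_space_uniform_measure) auto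

lemma sets_Um [simp, measurable_cong]: "sets Um = sets borel"
  unfolding Um_def by simp

lemma space_Um [simp]: "space Um = UNIV"
  unfolding Um_def by simp

lemma Um_fin: "finite_measure Um"
  using Um_prob prob_space.finite_measure by blast

lemma measure_Um: "A \<in> sets borel \<Longrightarrow> measure Um A = measure lborel ({0..2*pi} \<inter> A) / (2*pi)"
  unfolding Um_def by (subst measure_uniform_measure) auto

lemma Um_interval: assumes "a \<le> b" shows "measure Um {a..b} \<le> (b - a) / (2*pi)"
proof -
  have "measure lborel ({0..2*pi} \<inter> {a..b}) \<le> measure lborel {a..b}"
    by (rule measure_mono_fmeasurable) (auto intro: fmeasurable_compact)
  then show ?thesis using assms by (simp add: measure_Um divide_right_mono)
qed

lemma sin_lower: fixes x :: real assumes "0 \<le> x" "x \<le> 1" shows "x/2 \<le> sin x"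
proof (cases "x = 0")
  case True then show ?thesis by simp
next
  case False
  then have "0 < x" using assms by simp
  then obtain z where z: "0 < z" "z < x" "sin x - sin 0 = (x - 0) * cos z"
    using MVT2[of 0 x sin cos] by (auto intro: DERIV_sin)
  have "cos (pi/3) \<le> cos z"
    using z assms pi_gt3 by (intro cos_monotone_0_pi_le) auto
  then have "1/2 \<le> cos z" by (simp add: cos_60)
  then have "x * (1/2) \<le> x * cos z" using assms by (intro mult_left_mono) auto
  then show ?thesis using z by simp
qed

lemma chord: assumes "\<bar>a - b\<bar> \<le> 1" shows "\<bar>a - b\<bar> / 2 \<le> cmod (cis a - cis b)"
proof -
  have "cis a - cis b = cis b * (cis (a - b) - 1)"
    by (simp add: algebra_simps cis_mult)
  then have "cmod (cis a - cis b) = cmod (cis (a - b) - 1)" by (simp add: norm_mult)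
  moreover have "\<bar>sin (a - b)\<bar> \<le> cmod (cis (a - b) - 1)"
    using abs_Im_le_cmod[of "cis (a - b) - 1"] by simp
  moreover have "\<bar>a - b\<bar> / 2 \<le> \<bar>sin (a - b)\<bar>"
  proof (cases "0 \<le> a - b")
    case True then show ?thesis using sin_lower[of "a - b"] assms by auto
  next
    case False
    then have "(b - a)/2 \<le> sin (b - a)" using sin_lower[of "b - a"] assms by auto
    moreover have "sin (a - b) = - sin (b - a)" by (metis minus_diff_eq sin_minus)
    ultimately show ?thesis using False by auto
  qed
  ultimately show ?thesis by linarith
qed

lemma near_set: assumes "0 < \<delta>" shows "measure Um {\<theta>. cmod (cis \<theta> - z) < \<delta>} \<le> 16 * \<delta>"
proof -
  interpret fm: finite_measure Um by (rule Um_fin)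
  define S where "S = {\<theta>. cmod (cis \<theta> - z) < \<delta>}"
  have Sopen: "open S" unfolding S_def by (intro open_Collect_less continuous_intros)
  then have Sb: "S \<in> sets borel" by simp
  define T where "T j = {real j..real j + 1} \<inter> S" for j :: nat
  have Tb: "T j \<in> sets Um" for j unfolding T_def using Sb by auto
  have cover: "{0..2*pi} \<inter> S \<subseteq> (\<Union>j\<in>{..<8}. T j)"
  proof
    fix x assume x: "x \<in> {0..2*pi} \<inter> S"
    have x0: "0 \<le> x" "x \<le> 2*pi" using x by simp_all
    define k where "k = \<lfloor>x\<rfloor>"
    have k0: "0 \<le> k" unfolding k_def using x0 by simp
    have kx: "of_int k \<le> x" "x < of_int k + 1" unfolding k_def by simp_all
    define j where "j = nat k"
    have fj: "real j = of_int k" unfolding j_def using k0 by simp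
    have x8: "x < 8" using x0 pi_less_4 by linarith
    have "real j < 8" using fj kx x8 by linarith
    then have j8: "j < 8" by simp
    have "x \<in> T j" unfolding T_def using x fj kx by auto
    then show "x \<in> (\<Union>j\<in>{..<8}. T j)" using j8 by blast
  qed
  have Tj: "measure Um (T j) \<le> 2 * \<delta>" for j
  proof (cases "T j = {}")
    case True then show ?thesis using assms by simp
  next
    case False
    then obtain t0 where t0: "t0 \<in> T j" by blast
    have "T j \<subseteq> {t0 - 4*\<delta>..t0 + 4*\<delta>}"
    proof
      fix t assume t: "t \<in> T j"
      have "\<bar>t - t0\<bar> \<le> 1" using t t0 unfolding T_def by auto
      then have "\<bar>t - t0\<bar> / 2 \<le> cmod (cis t - cis t0)" by (rule chord)
      also have "\<dots> = cmod ((cis t - z) - (cis t0 - z))" by simp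
      also have "\<dots> \<le> cmod (cis t - z) + cmod (cis t0 - z)" by (rule norm_triangle_ineq4)
      also have "\<dots> < 2 * \<delta>" using t t0 unfolding T_def S_def by auto
      finally show "t \<in> {t0 - 4*\<delta>..t0 + 4*\<delta>}" by auto
    qed
    then have "measure Um (T j) \<le> measure Um {t0 - 4*\<delta>..t0 + 4*\<delta>}"
      by (intro fm.finite_measure_mono) auto
    also have "\<dots> \<le> (8 * \<delta>) / (2*pi)" using Um_interval[of "t0 - 4*\<delta>" "t0 + 4*\<delta>"] assms by simp
    also have "\<dots> \<le> 2 * \<delta>" using assms pi_gt3 by (simp add: field_simps)
    finally show ?thesis .
  qed
  have "measure Um S = measure Um ({0..2*pi} \<inter> S)" using Sb by (simp add: measure_Um Int_assoc)
  also have "\<dots> \<le> measure Um (\<Union>j\<in>{..<8}. T j)"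
    using cover Tb by (intro fm.finite_measure_mono) auto
  also have "\<dots> \<le> (\<Sum>j<8. measure Um (T j))"
    using Tb by (intro measure_UNION_le) auto
  also have "\<dots> \<le> (\<Sum>j<(8::nat). 2 * \<delta>)" by (intro sum_mono Tj)
  also have "\<dots> = 16 * \<delta>" by simp
  finally show ?thesis unfolding S_def .
qed

lemma bad_set:
  assumes "degree p \<le> D" "0 < \<delta>" "\<delta> \<le> 1"
  shows "measure Um {\<theta>. cmod (poly p (cis \<theta>)) < (\<delta>/3)^D * N1 p} \<le> 16 * D * \<delta>"
proof (cases "p = 0")
  case True then show ?thesis using assms by simp
next
  case False
  interpret fm: finite_measure Um by (rule Um_fin)
  define R where "R = {z. poly p z = 0}"
  have Rfin: "finite R" unfolding R_def using False poly_roots_finite by blast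
  have Rcard: "card R \<le> D" unfolding R_def using card_poly_roots_bound[OF False] assms by simp
  define B where "B z = {\<theta>. cmod (cis \<theta> - z) < \<delta>}" for z
  have Bb: "B z \<in> sets Um" for z
  proof -
    have "open (B z)" unfolding B_def by (intro open_Collect_less continuous_intros)
    then show ?thesis by simp
  qed
  have sub: "{\<theta>. cmod (poly p (cis \<theta>)) < (\<delta>/3)^D * N1 p} \<subseteq> (\<Union>z\<in>R. B z)"
  proof
    fix \<theta> assume th: "\<theta> \<in> {\<theta>. cmod (poly p (cis \<theta>)) < (\<delta>/3)^D * N1 p}"
    show "\<theta> \<in> (\<Union>z\<in>R. B z)"
    proof (rule ccontr)
      assume "\<theta> \<notin> (\<Union>z\<in>R. B z)"
      then have "\<forall>z. poly p z = 0 \<longrightarrow> \<delta> \<le> cmod (cis \<theta> - z)"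
        unfolding R_def B_def by (auto simp: not_less)
      then have "(\<delta>/3)^D * N1 p \<le> cmod (poly p (cis \<theta>))"
        using lower_bound_poly[of "cis \<theta>" \<delta> p D] assms by simp
      then show False using th by simp
    qed
  qed
  have "measure Um {\<theta>. cmod (poly p (cis \<theta>)) < (\<delta>/3)^D * N1 p} \<le> measure Um (\<Union>z\<in>R. B z)"
    using sub Bb Rfin by (intro fm.finite_measure_mono) auto
  also have "\<dots> \<le> (\<Sum>z\<in>R. measure Um (B z))"
    using Bb Rfin by (intro measure_UNION_le) auto
  also have "\<dots> \<le> (\<Sum>z\<in>R. 16 * \<delta>)" unfolding B_def using assms by (intro sum_mono near_set) auto
  also have "\<dots> = card R * (16 * \<delta>)" by simp
  also have "\<dots> \<le> D * (16 * \<delta>)" using Rcard assms by (intro mult_right_mono) auto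
  finally show ?thesis by simp
qed

definition cD :: "nat \<Rightarrow> real" where "cD D = (1 / (120 * (real D + 1))) ^ D"

lemma cD_pos: "0 < cD D" unfolding cD_def by simp

lemma good_point:
  assumes "degree p \<le> D" "degree q \<le> D"
  shows "\<exists>\<theta>. cD D * N1 p \<le> cmod (poly p (cis \<theta>)) \<and> cD D * N1 q \<le> cmod (poly q (cis \<theta>))"
proof (rule ccontr)
  assume H: "\<not> ?thesis"
  interpret pr: prob_space Um by (rule Um_prob)
  define \<delta> where "\<delta> = 1 / (40 * (real D + 1))"
  have d: "0 < \<delta>" "\<delta> \<le> 1" unfolding \<delta>_def by (auto simp: field_simps)
  have cd: "cD D = (\<delta>/3)^D" unfolding cD_def \<delta>_def by simp
  define Bp where "Bp = {\<theta>. cmod (poly p (cis \<theta>)) < (\<delta>/3)^D * N1 p}"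
  define Bq where "Bq = {\<theta>. cmod (poly q (cis \<theta>)) < (\<delta>/3)^D * N1 q}"
  have ob: "Bp \<in> sets Um" "Bq \<in> sets Um"
  proof -
    have "open Bp" "open Bq" unfolding Bp_def Bq_def by (intro open_Collect_less continuous_intros)+
    then show "Bp \<in> sets Um" "Bq \<in> sets Um" by auto
  qed
  have "UNIV \<subseteq> Bp \<union> Bq" using H unfolding Bp_def Bq_def cd by (auto simp: not_le)
  then have "measure Um UNIV \<le> measure Um (Bp \<union> Bq)"
    using ob by (intro pr.finite_measure_mono) auto
  also have "\<dots> \<le> measure Um Bp + measure Um Bq" using ob by (intro measure_Un_le) auto
  also have "\<dots> \<le> 16 * D * \<delta> + 16 * D * \<delta>"
    unfolding Bp_def Bq_def using bad_set assms d by (intro add_mono) auto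
  also have "\<dots> = (32 * real D) / (40 * (real D + 1))" unfolding \<delta>_def by simp
  also have "\<dots> < 1"
  proof -
    have "32 * real D < 40 * (real D + 1)" by simp
    then show ?thesis by (subst divide_less_eq_1_pos) auto
  qed
  finally show False using pr.prob_space by simp
qed


lemma lim_le_ultra:
  fixes f g :: "nat \<Rightarrow> real"
  assumes "ultrafilter_on_nat \<omega>" "(f \<longlongrightarrow> a) \<omega>" "(g \<longlongrightarrow> b) \<omega>" "eventually (\<lambda>n. f n \<le> g n) \<omega>"
  shows "a \<le> b"
  by (rule tendsto_le[OF ultra_nbot[OF assms(1)] assms(3) assms(2) assms(4)])

lemma lim_unique_ultra:
  fixes f :: "nat \<Rightarrow> real"
  assumes "ultrafilter_on_nat \<omega>" "(f \<longlongrightarrow> a) \<omega>" "(f \<longlongrightarrow> b) \<omega>"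
  shows "a = b"
  by (rule tendsto_unique[OF ultra_nbot[OF assms(1)] assms(2) assms(3)])

lemma powr_sum_le:
  fixes t :: "'i \<Rightarrow> real"
  assumes "finite I" "\<And>i. i \<in> I \<Longrightarrow> 0 \<le> t i" "0 < e" "e \<le> 1"
  shows "(\<Sum>i\<in>I. t i) powr e \<le> (\<Sum>i\<in>I. t i powr e)"
  using assms
proof (induction I rule: finite_induct)
  case empty then show ?case by simp
next
  case (insert x F)
  have "(\<Sum>i\<in>insert x F. t i) powr e = (t x + (\<Sum>i\<in>F. t i)) powr e" using insert by simp
  also have "\<dots> \<le> t x powr e + (\<Sum>i\<in>F. t i) powr e"
    using insert by (intro powr_subadd) (auto intro: sum_nonneg)
  also have "\<dots> \<le> t x powr e + (\<Sum>i\<in>F. t i powr e)" using insert by simp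
  finally show ?case using insert by simp
qed

context
  fixes \<epsilon> :: "nat \<Rightarrow> real"
  assumes eps: "\<forall>n. 0 < \<epsilon> n \<and> \<epsilon> n \<le> 1"
begin

lemma epos: "0 < \<epsilon> n" using eps by auto
lemma ele1: "\<epsilon> n \<le> 1" using eps by auto

lemma Aeps_le: "a \<in> Aeps \<epsilon> \<Longrightarrow> cmod (a n) powr \<epsilon> n \<le> normA \<epsilon> a"
  unfolding Aeps_def normA_def by (auto intro: cSUP_upper)

lemma normA_nonneg: "a \<in> Aeps \<epsilon> \<Longrightarrow> 0 \<le> normA \<epsilon> a"
  by (rule order.trans[OF powr_ge_zero Aeps_le])

lemma AepsI: "(\<And>n. cmod (a n) powr \<epsilon> n \<le> B) \<Longrightarrow> a \<in> Aeps \<epsilon>"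
  unfolding Aeps_def by (auto simp: bdd_above_def)

lemma Aeps_add: assumes "a \<in> Aeps \<epsilon>" "b \<in> Aeps \<epsilon>" shows "a + b \<in> Aeps \<epsilon>"
proof (rule AepsI)
  fix n
  have "cmod ((a + b) n) powr \<epsilon> n \<le> (cmod (a n) + cmod (b n)) powr \<epsilon> n"
    using epos[of n] by (intro powr_mono2) (auto intro: norm_triangle_ineq)
  also have "\<dots> \<le> cmod (a n) powr \<epsilon> n + cmod (b n) powr \<epsilon> n"
    using epos[of n] ele1[of n] by (intro powr_subadd) auto
  also have "\<dots> \<le> normA \<epsilon> a + normA \<epsilon> b" using assms by (intro add_mono Aeps_le)
  finally show "cmod ((a + b) n) powr \<epsilon> n \<le> normA \<epsilon> a + normA \<epsilon> b" .
qed

lemma Aeps_mult: assumes "a \<in> Aeps \<epsilon>" "b \<in> Aeps \<epsilon>" shows "a * b \<in> Aeps \<epsilon>"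
proof (rule AepsI)
  fix n
  have "cmod ((a * b) n) powr \<epsilon> n = cmod (a n) powr \<epsilon> n * cmod (b n) powr \<epsilon> n"
    by (simp add: norm_mult powr_mult)
  also have "\<dots> \<le> normA \<epsilon> a * normA \<epsilon> b"
    using assms by (intro mult_mono Aeps_le normA_nonneg) auto
  finally show "cmod ((a * b) n) powr \<epsilon> n \<le> normA \<epsilon> a * normA \<epsilon> b" .
qed

lemma Aeps_const: "(\<lambda>_. c) \<in> Aeps \<epsilon>"
proof (rule AepsI)
  fix n
  show "cmod c powr \<epsilon> n \<le> max 1 (cmod c)"
  proof (cases "cmod c \<le> 1")
    case True
    then have "cmod c powr \<epsilon> n \<le> 1" using epos[of n] by (intro powr_le1) auto
    then show ?thesis by simp
  next
    case False
    then have "cmod c powr \<epsilon> n \<le> cmod c powr 1" using ele1[of n] by (intro powr_mono) auto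
    then show ?thesis using False by simp
  qed
qed

lemma Aeps_zero: "0 \<in> Aeps \<epsilon>" using Aeps_const[of 0] by (simp add: zero_fun_def)
lemma Aeps_one: "1 \<in> Aeps \<epsilon>" using Aeps_const[of 1] by (simp add: one_fun_def)

lemma Aeps_sum: "finite I \<Longrightarrow> (\<And>i. i \<in> I \<Longrightarrow> f i \<in> Aeps \<epsilon>) \<Longrightarrow> sum f I \<in> Aeps \<epsilon>"
  by (induction I rule: finite_induct) (auto intro: Aeps_add Aeps_zero)

lemma Apoly_pCons: "pCons a p \<in> Apoly \<epsilon> \<longleftrightarrow> a \<in> Aeps \<epsilon> \<and> p \<in> Apoly \<epsilon>"
proof
  assume H: "pCons a p \<in> Apoly \<epsilon>"
  have "coeff (pCons a p) 0 \<in> Aeps \<epsilon>" using H unfolding Apoly_def by blast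
  then have "a \<in> Aeps \<epsilon>" by simp
  moreover have "p \<in> Apoly \<epsilon>" unfolding Apoly_def
  proof
    show "\<forall>k. coeff p k \<in> Aeps \<epsilon>"
    proof
      fix k have "coeff (pCons a p) (Suc k) \<in> Aeps \<epsilon>" using H unfolding Apoly_def by blast
      then show "coeff p k \<in> Aeps \<epsilon>" by simp
    qed
  qed
  ultimately show "a \<in> Aeps \<epsilon> \<and> p \<in> Apoly \<epsilon>" by simp
next
  assume "a \<in> Aeps \<epsilon> \<and> p \<in> Apoly \<epsilon>"
  then show "pCons a p \<in> Apoly \<epsilon>" unfolding Apoly_def
    by (auto simp: coeff_pCons split: nat.split)
qed

lemma Apoly_zero: "0 \<in> Apoly \<epsilon>" unfolding Apoly_def using Aeps_zero by simp
lemma Apoly_const: "[:a:] \<in> Apoly \<epsilon> \<longleftrightarrow> a \<in> Aeps \<epsilon>"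
  by (simp add: Apoly_pCons Apoly_zero)
lemma Apoly_one: "1 \<in> Apoly \<epsilon>" using Apoly_const[of 1] Aeps_one by (simp add: one_pCons)
lemma Apoly_X: "[:0, 1:] \<in> Apoly \<epsilon>" by (simp add: Apoly_pCons Apoly_zero Aeps_zero Aeps_one)

lemma Apoly_add: "P \<in> Apoly \<epsilon> \<Longrightarrow> Q \<in> Apoly \<epsilon> \<Longrightarrow> P + Q \<in> Apoly \<epsilon>"
  unfolding Apoly_def by (auto intro: Aeps_add)

lemma Apoly_mult: assumes "P \<in> Apoly \<epsilon>" "Q \<in> Apoly \<epsilon>" shows "P * Q \<in> Apoly \<epsilon>"
  unfolding Apoly_def mem_Collect_eq
proof
  fix k
  have "(\<Sum>i\<le>k. coeff P i * coeff Q (k - i)) \<in> Aeps \<epsilon>"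
    using assms unfolding Apoly_def by (intro Aeps_sum Aeps_mult) auto
  then show "coeff (P * Q) k \<in> Aeps \<epsilon>" by (simp add: coeff_mult)
qed

lemma poly_Aeps: "P \<in> Apoly \<epsilon> \<Longrightarrow> z \<in> Aeps \<epsilon> \<Longrightarrow> poly P z \<in> Aeps \<epsilon>"
proof (induction P)
  case 0 then show ?case using Aeps_zero by (simp add: zero_fun_def)
next
  case (pCons a p)
  then have h: "a \<in> Aeps \<epsilon>" "p \<in> Apoly \<epsilon>" by (auto simp: Apoly_pCons)
  then have "a + z * poly p z \<in> Aeps \<epsilon>" using pCons by (intro Aeps_add Aeps_mult) auto
  then show ?case by (simp only: poly_pCons)
qed

lemma coeff_Aeps: "P \<in> Apoly \<epsilon> \<Longrightarrow> coeff P k \<in> Aeps \<epsilon>"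
  unfolding Apoly_def by auto

lemma absw_tends:
  assumes "ultrafilter_on_nat \<omega>" "a \<in> Aeps \<epsilon>"
  shows "((\<lambda>n. cmod (a n) powr \<epsilon> n) \<longlongrightarrow> absw \<epsilon> \<omega> a) \<omega>"
  unfolding absw_def using assms Aeps_le by (intro ultra_lim[where a=0 and b="normA \<epsilon> a"]) auto

lemma absw_nonneg: "ultrafilter_on_nat \<omega> \<Longrightarrow> a \<in> Aeps \<epsilon> \<Longrightarrow> 0 \<le> absw \<epsilon> \<omega> a"
  using lim_le_ultra[OF _ tendsto_const absw_tends] by auto

lemma absw_le_normA: "ultrafilter_on_nat \<omega> \<Longrightarrow> a \<in> Aeps \<epsilon> \<Longrightarrow> absw \<epsilon> \<omega> a \<le> normA \<epsilon> a"
  using lim_le_ultra[OF _ absw_tends tendsto_const] Aeps_le by auto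

lemma absw_add: assumes "ultrafilter_on_nat \<omega>" "a \<in> Aeps \<epsilon>" "b \<in> Aeps \<epsilon>"
  shows "absw \<epsilon> \<omega> (a + b) \<le> absw \<epsilon> \<omega> a + absw \<epsilon> \<omega> b"
proof (rule lim_le_ultra[OF assms(1) absw_tends[OF assms(1) Aeps_add[OF assms(2,3)]]
      tendsto_add[OF absw_tends[OF assms(1,2)] absw_tends[OF assms(1,3)]]], intro always_eventually allI)
  fix n
  have "cmod ((a + b) n) powr \<epsilon> n \<le> (cmod (a n) + cmod (b n)) powr \<epsilon> n"
    using epos[of n] by (intro powr_mono2) (auto intro: norm_triangle_ineq)
  also have "\<dots> \<le> cmod (a n) powr \<epsilon> n + cmod (b n) powr \<epsilon> n"
    using epos[of n] ele1[of n] by (intro powr_subadd) auto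
  finally show "cmod ((a + b) n) powr \<epsilon> n \<le> cmod (a n) powr \<epsilon> n + cmod (b n) powr \<epsilon> n" .
qed

lemma absw_mult: assumes "ultrafilter_on_nat \<omega>" "a \<in> Aeps \<epsilon>" "b \<in> Aeps \<epsilon>"
  shows "absw \<epsilon> \<omega> (a * b) = absw \<epsilon> \<omega> a * absw \<epsilon> \<omega> b"
proof (rule lim_unique_ultra[OF assms(1) absw_tends[OF assms(1) Aeps_mult[OF assms(2,3)]]])
  have "((\<lambda>n. cmod (a n) powr \<epsilon> n * cmod (b n) powr \<epsilon> n) \<longlongrightarrow> absw \<epsilon> \<omega> a * absw \<epsilon> \<omega> b) \<omega>"
    by (intro tendsto_mult absw_tends assms)
  then show "((\<lambda>n. cmod ((a * b) n) powr \<epsilon> n) \<longlongrightarrow> absw \<epsilon> \<omega> a * absw \<epsilon> \<omega> b) \<omega>"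
    by (simp add: norm_mult powr_mult)
qed

lemma absw_const_tends: "ultrafilter_on_nat \<omega> \<Longrightarrow> ((\<lambda>n. cmod c powr \<epsilon> n) \<longlongrightarrow> absw \<epsilon> \<omega> (\<lambda>_. c)) \<omega>"
  using absw_tends[OF _ Aeps_const, of \<omega> c] by simp

lemma absw_one: "ultrafilter_on_nat \<omega> \<Longrightarrow> absw \<epsilon> \<omega> 1 = 1"
  using lim_unique_ultra[OF _ absw_tends[OF _ Aeps_one]] by (simp add: one_fun_def)

lemma absw_zero: "ultrafilter_on_nat \<omega> \<Longrightarrow> absw \<epsilon> \<omega> 0 = 0"
  using lim_unique_ultra[OF _ absw_tends[OF _ Aeps_zero]] by (simp add: zero_fun_def)

lemma absw_principal: "absw \<epsilon> (principal {n}) a = cmod (a n) powr \<epsilon> n"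
  unfolding absw_def by (rule Lim_principal)

lemma cis_Aeps: "(\<lambda>_. cis t) \<in> Aeps \<epsilon>" by (rule Aeps_const)

lemma absw_cis: "ultrafilter_on_nat \<omega> \<Longrightarrow> absw \<epsilon> \<omega> (\<lambda>_. cis t) = 1"
  using lim_unique_ultra[OF _ absw_const_tends[of _ "cis t"]] by simp

lemma evalpt_Disc:
  assumes U: "ultrafilter_on_nat \<omega>" and z: "z \<in> Aeps \<epsilon>" "absw \<epsilon> \<omega> z \<le> 1"
  shows "evalpt \<epsilon> \<omega> z \<in> Disc \<epsilon>"
proof -
  let ?x = "evalpt \<epsilon> \<omega> z"
  have pA: "P \<in> Apoly \<epsilon> \<Longrightarrow> poly P z \<in> Aeps \<epsilon>" for P using poly_Aeps z by auto
  have "?x \<in> Berk_A1 \<epsilon>" unfolding Berk_A1_def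
  proof (intro CollectI conjI ballI allI impI)
    fix P assume "P \<notin> Apoly \<epsilon>" then show "?x P = 0" by (simp add: evalpt_def)
  next
    fix P assume "P \<in> Apoly \<epsilon>" then show "0 \<le> ?x P" using absw_nonneg[OF U pA] by (simp add: evalpt_def)
  next
    show "?x 0 = 0" using Apoly_zero absw_zero[OF U] by (simp add: evalpt_def)
  next
    show "?x 1 = 1" using Apoly_one absw_one[OF U] by (simp add: evalpt_def)
  next
    fix P Q assume "P \<in> Apoly \<epsilon>" "Q \<in> Apoly \<epsilon>"
    then show "?x (P + Q) \<le> ?x P + ?x Q"
      using absw_add[OF U pA pA] Apoly_add by (simp add: evalpt_def)
  next
    fix P Q assume "P \<in> Apoly \<epsilon>" "Q \<in> Apoly \<epsilon>"
    then show "?x (P * Q) = ?x P * ?x Q"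
      using absw_mult[OF U pA pA] Apoly_mult by (simp add: evalpt_def)
  next
    fix a assume "a \<in> Aeps \<epsilon>"
    then show "?x [:a:] \<le> normA \<epsilon> a"
      using absw_le_normA[OF U] Apoly_const by (simp add: evalpt_def)
  qed
  moreover have "?x [:0, 1:] \<le> 1" using Apoly_X z by (simp add: evalpt_def)
  ultimately show ?thesis unfolding Disc_def by simp
qed

lemma evalpt_cis_Disc: assumes U: "ultrafilter_on_nat \<omega>" shows "evalpt \<epsilon> \<omega> (\<lambda>_. cis t) \<in> Disc \<epsilon>"
  by (rule evalpt_Disc[OF U cis_Aeps]) (simp add: absw_cis[OF U])

end


lemma powr_pow_comm: "0 \<le> (x::real) \<Longrightarrow> (x ^ D) powr e = (x powr e) ^ D"
proof (induction D)
  case 0 then show ?case by simp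
next
  case (Suc D)
  have "(x ^ Suc D) powr e = (x * x ^ D) powr e" by simp
  also have "\<dots> = x powr e * (x ^ D) powr e" using Suc by (simp add: powr_mult)
  finally show ?case using Suc by simp
qed

lemma max1_powr: "0 \<le> (t::real) \<Longrightarrow> 0 < e \<Longrightarrow> (max 1 t) powr e = max 1 (t powr e)"
proof (cases "t \<le> 1")
  case True
  assume "0 \<le> t" "0 < e"
  then have "t powr e \<le> 1" using True by (intro powr_le1) auto
  then show ?thesis using True by simp
next
  case False
  assume "0 \<le> t" "0 < e"
  then have "1 \<le> t powr e" using False by (simp add: ge_one_powr_ge_zero)
  then show ?thesis using False by simp
qed

lemma poly_le_N1_gen: "cmod (poly p w) \<le> N1 p * max 1 (cmod w) ^ degree p"
proof -
  have "cmod (poly p w) = cmod (\<Sum>k\<le>degree p. coeff p k * w ^ k)" by (simp add: poly_altdef)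
  also have "\<dots> \<le> (\<Sum>k\<le>degree p. cmod (coeff p k * w ^ k))" by (rule norm_sum)
  also have "\<dots> \<le> (\<Sum>k\<le>degree p. cmod (coeff p k) * max 1 (cmod w) ^ degree p)"
  proof (intro sum_mono)
    fix k assume k: "k \<in> {..degree p}"
    have "cmod w ^ k \<le> max 1 (cmod w) ^ k" by (intro power_mono) auto
    also have "\<dots> \<le> max 1 (cmod w) ^ degree p" using k by (intro power_increasing) auto
    finally have "cmod (w ^ k) \<le> max 1 (cmod w) ^ degree p" by (simp add: norm_power)
    then show "cmod (coeff p k * w ^ k) \<le> cmod (coeff p k) * max 1 (cmod w) ^ degree p"
      by (simp add: norm_mult mult_left_mono)
  qed
  also have "\<dots> = N1 p * max 1 (cmod w) ^ degree p" by (simp add: N1_def sum_distrib_right)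
  finally show ?thesis .
qed

context
  fixes \<epsilon> :: "nat \<Rightarrow> real"
  assumes eps: "\<forall>n. 0 < \<epsilon> n \<and> \<epsilon> n \<le> 1"
begin

lemma epos': "0 < \<epsilon> n" using eps by auto
lemma ele1': "\<epsilon> n \<le> 1" using eps by auto

lemma nonarch_eps:
  assumes U: "ultrafilter_on_nat \<omega>" and na: "\<not> archimedean_at \<epsilon> \<omega>"
  shows "(\<epsilon> \<longlongrightarrow> 0) \<omega>"
proof -
  let ?A = "absw \<epsilon> \<omega> (\<lambda>_. 2)"
  have t: "((\<lambda>n. 2 powr \<epsilon> n) \<longlongrightarrow> ?A) \<omega>" using absw_const_tends[OF eps U, of 2] by simp
  have "?A \<le> 1" using na unfolding archimedean_at_def by simp
  moreover have "1 \<le> ?A"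
  proof (rule lim_le_ultra[OF U tendsto_const t], intro always_eventually allI)
    fix n show "1 \<le> 2 powr \<epsilon> n" using epos'[of n] by (intro ge_one_powr_ge_zero) auto
  qed
  ultimately have A1: "?A = 1" by simp
  have "((\<lambda>n. log 2 (2 powr \<epsilon> n)) \<longlongrightarrow> log 2 1) \<omega>"
    using t A1 by (intro tendsto_log tendsto_const) auto
  then show ?thesis by simp
qed

lemma nonarch_const:
  assumes "ultrafilter_on_nat \<omega>" "\<not> archimedean_at \<epsilon> \<omega>" "0 < c"
  shows "((\<lambda>n. c powr \<epsilon> n) \<longlongrightarrow> 1) \<omega>"
proof -
  have "((\<lambda>n. c powr \<epsilon> n) \<longlongrightarrow> c powr 0) \<omega>"
    using assms by (intro tendsto_powr tendsto_const nonarch_eps) auto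
  then show ?thesis using assms by simp
qed

definition bP :: "seq poly \<Rightarrow> real" where
  "bP P = (if P \<in> Apoly \<epsilon> then (\<Sum>k\<le>degree P. normA \<epsilon> (coeff P k)) else 0)"

lemma N1_cp: "N1 (cp P n) = (\<Sum>k\<le>degree P. cmod (coeff P k n))"
  using N1_ext[OF degree_cp[of P n]] by (simp add: coeff_cp)

lemma N1_cp_bound: assumes "P \<in> Apoly \<epsilon>" shows "N1 (cp P n) powr \<epsilon> n \<le> bP P"
proof -
  have "N1 (cp P n) powr \<epsilon> n \<le> (\<Sum>k\<le>degree P. cmod (coeff P k n) powr \<epsilon> n)"
    unfolding N1_cp using epos'[of n] ele1'[of n] by (intro powr_sum_le) auto
  also have "\<dots> \<le> bP P" unfolding bP_def using assms
    by (auto intro!: sum_mono Aeps_le[OF eps] coeff_Aeps[OF eps])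
  finally show ?thesis .
qed

definition GN :: "nat filter \<Rightarrow> seq poly \<Rightarrow> real" where
  "GN \<omega> P = Lim \<omega> (\<lambda>n. N1 (cp P n) powr \<epsilon> n)"

lemma GN_tends: assumes "ultrafilter_on_nat \<omega>" "P \<in> Apoly \<epsilon>"
  shows "((\<lambda>n. N1 (cp P n) powr \<epsilon> n) \<longlongrightarrow> GN \<omega> P) \<omega>"
  unfolding GN_def using assms N1_cp_bound by (intro ultra_lim[where a=0 and b="bP P"]) auto

lemma GN_nonneg: "ultrafilter_on_nat \<omega> \<Longrightarrow> P \<in> Apoly \<epsilon> \<Longrightarrow> 0 \<le> GN \<omega> P"
  using lim_le_ultra[OF _ tendsto_const GN_tends] by auto

lemma GN_le_bP: "ultrafilter_on_nat \<omega> \<Longrightarrow> P \<in> Apoly \<epsilon> \<Longrightarrow> GN \<omega> P \<le> bP P"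
  using lim_le_ultra[OF _ GN_tends tendsto_const] N1_cp_bound by auto

lemma abs_poly_tends:
  assumes "ultrafilter_on_nat \<omega>" "P \<in> Apoly \<epsilon>" "z \<in> Aeps \<epsilon>"
  shows "((\<lambda>n. cmod (poly (cp P n) (z n)) powr \<epsilon> n) \<longlongrightarrow> absw \<epsilon> \<omega> (poly P z)) \<omega>"
  using absw_tends[OF eps assms(1) poly_Aeps[OF eps assms(2,3)]] by (simp add: poly_cp)

lemma gauss_eq:
  assumes U: "ultrafilter_on_nat \<omega>" and na: "\<not> archimedean_at \<epsilon> \<omega>" and P: "P \<in> Apoly \<epsilon>"
  shows "gauss \<epsilon> \<omega> P = GN \<omega> P"
proof -
  define D where "D = degree P"
  define Z where "Z = {z \<in> Aeps \<epsilon>. absw \<epsilon> \<omega> z \<le> 1}"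
  have up: "absw \<epsilon> \<omega> (poly P z) \<le> GN \<omega> P" if z: "z \<in> Z" for z
  proof -
    have zA: "z \<in> Aeps \<epsilon>" and z1: "absw \<epsilon> \<omega> z \<le> 1" using z unfolding Z_def by auto
    have le: "cmod (poly (cp P n) (z n)) powr \<epsilon> n \<le>
        N1 (cp P n) powr \<epsilon> n * (max 1 (cmod (z n) powr \<epsilon> n)) ^ D" for n
    proof -
      have "cmod (poly (cp P n) (z n)) \<le> N1 (cp P n) * max 1 (cmod (z n)) ^ degree (cp P n)"
        by (rule poly_le_N1_gen)
      also have "\<dots> \<le> N1 (cp P n) * max 1 (cmod (z n)) ^ D"
        unfolding D_def using degree_cp[of P n]
        by (intro mult_left_mono power_increasing N1_nonneg) auto
      finally have "cmod (poly (cp P n) (z n)) powr \<epsilon> n \<le> (N1 (cp P n) * max 1 (cmod (z n)) ^ D) powr \<epsilon> n"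
        using epos'[of n] by (intro powr_mono2) auto
      also have "\<dots> = N1 (cp P n) powr \<epsilon> n * (max 1 (cmod (z n)) powr \<epsilon> n) ^ D"
        using N1_nonneg by (simp add: powr_mult powr_pow_comm)
      also have "\<dots> = N1 (cp P n) powr \<epsilon> n * (max 1 (cmod (z n) powr \<epsilon> n)) ^ D"
        using epos'[of n] by (simp add: max1_powr)
      finally show ?thesis .
    qed
    have "((\<lambda>n. N1 (cp P n) powr \<epsilon> n * (max 1 (cmod (z n) powr \<epsilon> n)) ^ D) \<longlongrightarrow>
        GN \<omega> P * (max 1 (absw \<epsilon> \<omega> z)) ^ D) \<omega>"
      by (intro tendsto_intros GN_tends absw_tends[OF eps] U P zA)
    then have "absw \<epsilon> \<omega> (poly P z) \<le> GN \<omega> P * (max 1 (absw \<epsilon> \<omega> z)) ^ D"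
      by (intro lim_le_ultra[OF U abs_poly_tends[OF U P zA]]) (auto simp: le)
    then show ?thesis using z1 by simp
  qed
  have "\<forall>n. \<exists>t. cD D * N1 (cp P n) \<le> cmod (poly (cp P n) (cis t))"
  proof
    fix n
    show "\<exists>t. cD D * N1 (cp P n) \<le> cmod (poly (cp P n) (cis t))"
      using good_point[of "cp P n" D "cp P n"] degree_cp[of P n] unfolding D_def by auto
  qed
  then obtain th where th: "\<And>n. cD D * N1 (cp P n) \<le> cmod (poly (cp P n) (cis (th n)))"
    by metis
  define z0 where "z0 = (\<lambda>n. cis (th n))"
  have z0A: "z0 \<in> Aeps \<epsilon>" unfolding z0_def by (rule AepsI[OF eps, where B=1]) simp
  have z0abs: "absw \<epsilon> \<omega> z0 = 1"
  proof -
    have "((\<lambda>n. cmod (z0 n) powr \<epsilon> n) \<longlongrightarrow> 1) \<omega>" unfolding z0_def by simp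
    then show ?thesis using lim_unique_ultra[OF U absw_tends[OF eps U z0A]] by blast
  qed
  have z0Z: "z0 \<in> Z" unfolding Z_def using z0A z0abs by simp
  have low: "GN \<omega> P \<le> absw \<epsilon> \<omega> (poly P z0)"
  proof -
    have "((\<lambda>n. cD D powr \<epsilon> n * N1 (cp P n) powr \<epsilon> n) \<longlongrightarrow> 1 * GN \<omega> P) \<omega>"
      by (intro tendsto_mult nonarch_const[OF U na cD_pos] GN_tends[OF U P])
    moreover have "cD D powr \<epsilon> n * N1 (cp P n) powr \<epsilon> n \<le> cmod (poly (cp P n) (z0 n)) powr \<epsilon> n" for n
    proof -
      have "cD D powr \<epsilon> n * N1 (cp P n) powr \<epsilon> n = (cD D * N1 (cp P n)) powr \<epsilon> n"
        using cD_pos[of D] N1_nonneg by (simp add: powr_mult)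
      also have "\<dots> \<le> cmod (poly (cp P n) (z0 n)) powr \<epsilon> n"
        unfolding z0_def using th[of n] epos'[of n] cD_pos[of D] N1_nonneg
        by (intro powr_mono2) auto
      finally show ?thesis .
    qed
    ultimately show ?thesis
      using lim_le_ultra[OF U _ abs_poly_tends[OF U P z0A]] by auto
  qed
  have bdd: "bdd_above ((\<lambda>z. absw \<epsilon> \<omega> (poly P z)) ` Z)"
    using up by (auto simp: bdd_above_def)
  have "gauss \<epsilon> \<omega> P = (SUP z\<in>Z. absw \<epsilon> \<omega> (poly P z))"
    unfolding gauss_def Z_def using P by simp
  also have "\<dots> = GN \<omega> P"
  proof (rule antisym)
    show "(SUP z\<in>Z. absw \<epsilon> \<omega> (poly P z)) \<le> GN \<omega> P"
      using z0Z up by (intro cSUP_least) auto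
    show "GN \<omega> P \<le> (SUP z\<in>Z. absw \<epsilon> \<omega> (poly P z))"
      using low z0Z bdd by (intro cSUP_upper2) auto
  qed
  finally show ?thesis .
qed

end


context
  fixes \<epsilon> :: "nat \<Rightarrow> real"
  assumes eps: "\<forall>n. 0 < \<epsilon> n \<and> \<epsilon> n \<le> 1"
begin

lemma epos3: "0 < \<epsilon> n" using eps by auto
lemma ele3: "\<epsilon> n \<le> 1" using eps by auto

lemma GN_const_eq: assumes "ultrafilter_on_nat \<omega>" "(\<lambda>n. N1 (cp P n) powr \<epsilon> n) = (\<lambda>n. c)" "P \<in> Apoly \<epsilon>"
  shows "GN \<epsilon> \<omega> P = c"
  using lim_unique_ultra[OF assms(1) GN_tends[OF eps assms(1) assms(3)]] assms(2) by simp

lemma gauss_Disc: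
  assumes U: "ultrafilter_on_nat \<omega>" and na: "\<not> archimedean_at \<epsilon> \<omega>"
  shows "gauss \<epsilon> \<omega> \<in> Disc \<epsilon>"
proof -
  let ?g = "gauss \<epsilon> \<omega>"
  have ge: "P \<in> Apoly \<epsilon> \<Longrightarrow> ?g P = GN \<epsilon> \<omega> P" for P using gauss_eq[OF eps U na] by auto
  have GT: "P \<in> Apoly \<epsilon> \<Longrightarrow> ((\<lambda>n. N1 (cp P n) powr \<epsilon> n) \<longlongrightarrow> ?g P) \<omega>" for P
    using GN_tends[OF eps U] ge by auto
  have "?g \<in> Berk_A1 \<epsilon>" unfolding Berk_A1_def
  proof (intro CollectI conjI ballI allI impI)
    fix P assume "P \<notin> Apoly \<epsilon>" then show "?g P = 0" by (simp add: gauss_def)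
  next
    fix P assume "P \<in> Apoly \<epsilon>" then show "0 \<le> ?g P" using ge GN_nonneg[OF eps U] by auto
  next
    have "((\<lambda>n. N1 (cp 0 n) powr \<epsilon> n) \<longlongrightarrow> 0) \<omega>" by (simp add: cp_zero)
    then show "?g 0 = 0" using lim_unique_ultra[OF U GT[OF Apoly_zero[OF eps]]] by blast
  next
    have "((\<lambda>n. N1 (cp 1 n) powr \<epsilon> n) \<longlongrightarrow> 1) \<omega>" by (simp add: cp_one)
    then show "?g 1 = 1" using lim_unique_ultra[OF U GT[OF Apoly_one[OF eps]]] by blast
  next
    fix P Q assume P: "P \<in> Apoly \<epsilon>" and Q: "Q \<in> Apoly \<epsilon>"
    have PQ: "P + Q \<in> Apoly \<epsilon>" using Apoly_add[OF eps P Q] .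
    show "?g (P + Q) \<le> ?g P + ?g Q"
    proof (rule lim_le_ultra[OF U GT[OF PQ] tendsto_add[OF GT[OF P] GT[OF Q]]], intro always_eventually allI)
      fix n
      have "N1 (cp (P + Q) n) powr \<epsilon> n \<le> (N1 (cp P n) + N1 (cp Q n)) powr \<epsilon> n"
        unfolding cp_add using epos3[of n] N1_nonneg by (intro powr_mono2 N1_add) auto
      also have "\<dots> \<le> N1 (cp P n) powr \<epsilon> n + N1 (cp Q n) powr \<epsilon> n"
        using epos3[of n] ele3[of n] N1_nonneg by (intro powr_subadd) auto
      finally show "N1 (cp (P + Q) n) powr \<epsilon> n \<le> N1 (cp P n) powr \<epsilon> n + N1 (cp Q n) powr \<epsilon> n" .
    qed
  next
    fix P Q assume P: "P \<in> Apoly \<epsilon>" and Q: "Q \<in> Apoly \<epsilon>"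
    have PQ: "P * Q \<in> Apoly \<epsilon>" using Apoly_mult[OF eps P Q] .
    show "?g (P * Q) = ?g P * ?g Q"
    proof (rule antisym)
      show "?g (P * Q) \<le> ?g P * ?g Q"
      proof (rule lim_le_ultra[OF U GT[OF PQ] tendsto_mult[OF GT[OF P] GT[OF Q]]], intro always_eventually allI)
        fix n
        have "N1 (cp (P * Q) n) powr \<epsilon> n \<le> (N1 (cp P n) * N1 (cp Q n)) powr \<epsilon> n"
          unfolding cp_mult using epos3[of n] N1_nonneg by (intro powr_mono2 N1_mult) auto
        also have "\<dots> = N1 (cp P n) powr \<epsilon> n * N1 (cp Q n) powr \<epsilon> n"
          using N1_nonneg by (simp add: powr_mult)
        finally show "N1 (cp (P * Q) n) powr \<epsilon> n \<le> N1 (cp P n) powr \<epsilon> n * N1 (cp Q n) powr \<epsilon> n" .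
      qed
    next
      define D where "D = max (degree P) (degree Q)"
      define c where "c = cD D * cD D"
      have c0: "0 < c" unfolding c_def using cD_pos by simp
      have "((\<lambda>n. c powr \<epsilon> n * (N1 (cp P n) powr \<epsilon> n * N1 (cp Q n) powr \<epsilon> n)) \<longlongrightarrow> 1 * (?g P * ?g Q)) \<omega>"
        by (intro tendsto_mult nonarch_const[OF eps U na c0] GT P Q)
      then show "?g P * ?g Q \<le> ?g (P * Q)"
      proof (intro lim_le_ultra[OF U _ GT[OF PQ]], simp, intro always_eventually allI)
        fix n
        let ?p = "cp P n" and ?q = "cp Q n"
        obtain t where t: "cD D * N1 ?p \<le> cmod (poly ?p (cis t))" "cD D * N1 ?q \<le> cmod (poly ?q (cis t))"
          using good_point[of ?p D ?q] degree_cp[of P n] degree_cp[of Q n] unfolding D_def by force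
        have "c * (N1 ?p * N1 ?q) = (cD D * N1 ?p) * (cD D * N1 ?q)" unfolding c_def by simp
        also have "\<dots> \<le> cmod (poly ?p (cis t)) * cmod (poly ?q (cis t))"
          using t cD_pos[of D] N1_nonneg by (intro mult_mono) auto
        also have "\<dots> = cmod (poly (?p * ?q) (cis t))" by (simp add: norm_mult)
        also have "\<dots> \<le> N1 (?p * ?q)" by (rule poly_le_N1) simp
        finally have le: "c * (N1 ?p * N1 ?q) \<le> N1 (cp (P * Q) n)" by (simp add: cp_mult)
        have "c powr \<epsilon> n * (N1 ?p powr \<epsilon> n * N1 ?q powr \<epsilon> n) = (c * (N1 ?p * N1 ?q)) powr \<epsilon> n"
          using c0 N1_nonneg by (simp add: powr_mult)
        also have "\<dots> \<le> N1 (cp (P * Q) n) powr \<epsilon> n"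
          using le c0 N1_nonneg epos3[of n] by (intro powr_mono2) auto
        finally show "c powr \<epsilon> n * (N1 ?p powr \<epsilon> n * N1 ?q powr \<epsilon> n) \<le> N1 (cp (P * Q) n) powr \<epsilon> n" .
      qed
    qed
  next
    fix a assume a: "a \<in> Aeps \<epsilon>"
    have "((\<lambda>n. N1 (cp [:a:] n) powr \<epsilon> n) \<longlongrightarrow> absw \<epsilon> \<omega> a) \<omega>"
      using absw_tends[OF eps U a] by (simp add: cp_const)
    then have "?g [:a:] = absw \<epsilon> \<omega> a"
      using lim_unique_ultra[OF U GT[OF iffD2[OF Apoly_const[OF eps] a]]] by blast
    then show "?g [:a:] \<le> normA \<epsilon> a" using absw_le_normA[OF eps U a] by simp
  qed
  moreover have "?g [:0, 1:] \<le> 1"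
  proof -
    have "((\<lambda>n. N1 (cp [:0, 1:] n) powr \<epsilon> n) \<longlongrightarrow> 1) \<omega>" by (simp add: cp_X N1_pCons)
    then show ?thesis using lim_unique_ultra[OF U GT[OF Apoly_X[OF eps]]] by simp
  qed
  ultimately show ?thesis unfolding Disc_def by simp
qed

lemma gauss_bP:
  assumes U: "ultrafilter_on_nat \<omega>" and na: "\<not> archimedean_at \<epsilon> \<omega>"
  shows "gauss \<epsilon> \<omega> P \<le> bP \<epsilon> P"
proof (cases "P \<in> Apoly \<epsilon>")
  case True then show ?thesis using gauss_eq[OF eps U na True] GN_le_bP[OF eps U True] by simp
next
  case False then show ?thesis by (simp add: gauss_def bP_def[OF eps])
qed

end


lemma open_box_coord: "open {y::'i \<Rightarrow> real. \<bar>y i - c\<bar> < r}"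
  by (intro open_Collect_less continuous_intros continuous_on_product_coordinates)

lemma open_box: assumes "finite F" shows "open {y::'i \<Rightarrow> real. \<forall>i\<in>F. \<bar>y i - c i\<bar> < r}"
proof -
  have "{y::'i \<Rightarrow> real. \<forall>i\<in>F. \<bar>y i - c i\<bar> < r} = (\<Inter>i\<in>F. {y. \<bar>y i - c i\<bar> < r})" by auto
  also have "open \<dots>" by (rule open_INT[OF assms]) (intro ballI open_box_coord)
  finally show ?thesis .
qed

lemma nbhd_basis:
  fixes x :: "'i \<Rightarrow> real"
  assumes "open W" "x \<in> W"
  shows "\<exists>F \<delta>. finite F \<and> 0 < \<delta> \<and> {y. \<forall>i\<in>F. \<bar>y i - x i\<bar> < \<delta>} \<subseteq> W"
proof -
  have "openin (product_topology (\<lambda>i. euclidean) UNIV) W" using assms(1) by (simp add: open_fun_def)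
  from product_topology_open_contains_basis[OF this assms(2)] obtain X where
    X: "x \<in> Pi\<^sub>E UNIV X" "\<forall>i. open (X i)" "finite {i. X i \<noteq> UNIV}" "Pi\<^sub>E UNIV X \<subseteq> W"
    by auto
  define F where "F = {i. X i \<noteq> UNIV}"
  have "\<forall>i\<in>F. \<exists>r>0. ball (x i) r \<subseteq> X i"
    using X(1,2) by (auto simp: open_contains_ball)
  then obtain r where r: "\<forall>i\<in>F. r i > 0 \<and> ball (x i) (r i) \<subseteq> X i" by metis
  define \<delta> where "\<delta> = (if F = {} then 1 else Min (r ` F))"
  have fin: "finite F" using X(3) by (simp add: F_def)
  have d0: "0 < \<delta>" unfolding \<delta>_def using fin r by auto
  have dle: "\<delta> \<le> r i" if "i \<in> F" for i unfolding \<delta>_def using fin that by auto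
  have "{y. \<forall>i\<in>F. \<bar>y i - x i\<bar> < \<delta>} \<subseteq> W"
  proof
    fix y assume y: "y \<in> {y. \<forall>i\<in>F. \<bar>y i - x i\<bar> < \<delta>}"
    have "y i \<in> X i" for i
    proof (cases "i \<in> F")
      case True
      then have "\<bar>y i - x i\<bar> < r i" using y dle[OF True] by force
      then have "y i \<in> ball (x i) (r i)" by (simp add: dist_real_def abs_minus_commute)
      then show ?thesis using r True by blast
    next
      case False then show ?thesis by (simp add: F_def)
    qed
    then have "y \<in> Pi\<^sub>E UNIV X" by auto
    then show "y \<in> W" using X(4) by blast
  qed
  then show ?thesis using fin d0 by blast
qed

lemma uc_compact:
  fixes h :: "('i \<Rightarrow> real) \<Rightarrow> real"
  assumes K: "compact K" "K \<subseteq> S" and h: "continuous_on S h" and eta: "0 < \<eta>"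
  shows "\<exists>F \<delta>. finite F \<and> 0 < \<delta> \<and> (\<forall>k\<in>K. \<forall>y\<in>S. (\<forall>i\<in>F. \<bar>y i - k i\<bar> < \<delta>) \<longrightarrow> \<bar>h y - h k\<bar> < \<eta>)"
proof -
  have "\<forall>k\<in>K. \<exists>F \<delta>. finite F \<and> 0 < \<delta> \<and>
      (\<forall>y\<in>S. (\<forall>i\<in>F. \<bar>y i - k i\<bar> < \<delta>) \<longrightarrow> \<bar>h y - h k\<bar> < \<eta>/2)"
  proof
    fix k assume k: "k \<in> K"
    then have kS: "k \<in> S" using K by auto
    have "open (ball (h k) (\<eta>/2))" "h k \<in> ball (h k) (\<eta>/2)" using eta by auto
    then obtain A where A: "open A" "k \<in> A" "\<forall>y\<in>S. y \<in> A \<longrightarrow> h y \<in> ball (h k) (\<eta>/2)"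
      using h kS unfolding continuous_on_topological by metis
    obtain F \<delta> where Fd: "finite F" "0 < \<delta>" "{y. \<forall>i\<in>F. \<bar>y i - k i\<bar> < \<delta>} \<subseteq> A"
      using nbhd_basis[OF A(1,2)] by blast
    show "\<exists>F \<delta>. finite F \<and> 0 < \<delta> \<and> (\<forall>y\<in>S. (\<forall>i\<in>F. \<bar>y i - k i\<bar> < \<delta>) \<longrightarrow> \<bar>h y - h k\<bar> < \<eta>/2)"
    proof (intro exI conjI ballI impI)
      fix y assume "y \<in> S" "\<forall>i\<in>F. \<bar>y i - k i\<bar> < \<delta>"
      then have "h y \<in> ball (h k) (\<eta>/2)" using A(3) Fd(3) by blast
      then show "\<bar>h y - h k\<bar> < \<eta>/2" by (simp add: dist_real_def abs_minus_commute)
    qed (use Fd in auto)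
  qed
  then obtain Fk where "\<forall>k\<in>K. \<exists>\<delta>. finite (Fk k) \<and> 0 < \<delta> \<and>
      (\<forall>y\<in>S. (\<forall>i\<in>Fk k. \<bar>y i - k i\<bar> < \<delta>) \<longrightarrow> \<bar>h y - h k\<bar> < \<eta>/2)"
    by (rule bchoice[elim_format]) blast
  then obtain dk where D: "\<forall>k\<in>K. finite (Fk k) \<and> 0 < dk k \<and>
      (\<forall>y\<in>S. (\<forall>i\<in>Fk k. \<bar>y i - k i\<bar> < dk k) \<longrightarrow> \<bar>h y - h k\<bar> < \<eta>/2)"
    by (rule bchoice[elim_format]) blast
  define V where "V k = {y. \<forall>i\<in>Fk k. \<bar>y i - k i\<bar> < dk k / 2}" for k
  have Vo: "open (V k)" if "k \<in> K" for k unfolding V_def using D that by (intro open_box) auto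
  have Vc: "K \<subseteq> \<Union>(V ` K)"
  proof
    fix k assume "k \<in> K" then have "k \<in> V k" unfolding V_def using D by auto
    then show "k \<in> \<Union>(V ` K)" using \<open>k \<in> K\<close> by blast
  qed
  obtain K' where K': "K' \<subseteq> K" "finite K'" "K \<subseteq> \<Union>(V ` K')"
    using compactE_image[OF K(1), of K V] Vo Vc by metis
  define F where "F = (\<Union>k\<in>K'. Fk k)"
  define \<delta> where "\<delta> = (if K' = {} then 1 else Min ((\<lambda>k. dk k / 2) ` K'))"
  have finF: "finite F" unfolding F_def using K' D by auto
  have d0: "0 < \<delta>" unfolding \<delta>_def using K' D by auto
  have dle: "\<delta> \<le> dk k / 2" if "k \<in> K'" for k
  proof -
    have "Min ((\<lambda>k. dk k / 2) ` K') \<le> dk k / 2" using K' that by (intro Min_le) auto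
    then show ?thesis unfolding \<delta>_def using that by auto
  qed
  have "\<forall>k\<in>K. \<forall>y\<in>S. (\<forall>i\<in>F. \<bar>y i - k i\<bar> < \<delta>) \<longrightarrow> \<bar>h y - h k\<bar> < \<eta>"
  proof (intro ballI impI)
    fix k y assume k: "k \<in> K" and y: "y \<in> S" and cl: "\<forall>i\<in>F. \<bar>y i - k i\<bar> < \<delta>"
    obtain k' where k': "k' \<in> K'" "k \<in> V k'" using K'(3) k by blast
    have k'K: "k' \<in> K" using k' K' by auto
    have Dk': "finite (Fk k')" "0 < dk k'"
      "\<forall>y\<in>S. (\<forall>i\<in>Fk k'. \<bar>y i - k' i\<bar> < dk k') \<longrightarrow> \<bar>h y - h k'\<bar> < \<eta>/2"
      using D k'K by auto
    have kS: "k \<in> S" using k K by auto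
    have 1: "\<bar>h k - h k'\<bar> < \<eta>/2"
    proof -
      have "\<forall>i\<in>Fk k'. \<bar>k i - k' i\<bar> < dk k'" using k'(2) Dk'(2) unfolding V_def by force
      then show ?thesis using Dk'(3) kS by blast
    qed
    have 2: "\<bar>h y - h k'\<bar> < \<eta>/2"
    proof -
      have "\<forall>i\<in>Fk k'. \<bar>y i - k' i\<bar> < dk k'"
      proof
        fix i assume i: "i \<in> Fk k'"
        have "\<bar>k i - k' i\<bar> < dk k' / 2" using k'(2) i unfolding V_def by auto
        moreover have "\<bar>y i - k i\<bar> < dk k' / 2" using cl i k'(1) dle[OF k'(1)] unfolding F_def by force
        ultimately show "\<bar>y i - k' i\<bar> < dk k'" by linarith
      qed
      then show ?thesis using Dk'(3) y by blast
    qed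
    show "\<bar>h y - h k\<bar> < \<eta>" using 1 2 by linarith
  qed
  then show ?thesis using finF d0 by blast
qed

lemma open_const_set: "open {x. c}"
  by (cases c) auto

lemma closed_const_set: "closed {x. c}"
  by (cases c) auto


lemma istopology_P1top: "istopology (\<lambda>U. U \<subseteq> P1 \<epsilon> \<and>
      openin (subtopology euclidean (Disc \<epsilon>)) {x \<in> Disc \<epsilon>. chart0 x \<in> U} \<and>
      openin (subtopology euclidean (Disc \<epsilon>)) {y \<in> Disc \<epsilon>. chartInf \<epsilon> y \<in> U})"
  unfolding istopology_def
proof (rule conjI; intro allI impI)
  fix S T :: "P1point set"
  assume S: "S \<subseteq> P1 \<epsilon> \<and> openin (top_of_set (Disc \<epsilon>)) {x \<in> Disc \<epsilon>. chart0 x \<in> S} \<and>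
      openin (top_of_set (Disc \<epsilon>)) {y \<in> Disc \<epsilon>. chartInf \<epsilon> y \<in> S}"
  assume T: "T \<subseteq> P1 \<epsilon> \<and> openin (top_of_set (Disc \<epsilon>)) {x \<in> Disc \<epsilon>. chart0 x \<in> T} \<and>
      openin (top_of_set (Disc \<epsilon>)) {y \<in> Disc \<epsilon>. chartInf \<epsilon> y \<in> T}"
  have e1: "{x \<in> Disc \<epsilon>. chart0 x \<in> S \<inter> T} = {x \<in> Disc \<epsilon>. chart0 x \<in> S} \<inter> {x \<in> Disc \<epsilon>. chart0 x \<in> T}" by auto
  have e2: "{x \<in> Disc \<epsilon>. chartInf \<epsilon> x \<in> S \<inter> T} = {x \<in> Disc \<epsilon>. chartInf \<epsilon> x \<in> S} \<inter> {x \<in> Disc \<epsilon>. chartInf \<epsilon> x \<in> T}" by auto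
  show "S \<inter> T \<subseteq> P1 \<epsilon> \<and> openin (top_of_set (Disc \<epsilon>)) {x \<in> Disc \<epsilon>. chart0 x \<in> S \<inter> T} \<and>
      openin (top_of_set (Disc \<epsilon>)) {y \<in> Disc \<epsilon>. chartInf \<epsilon> y \<in> S \<inter> T}"
    using S T unfolding e1 e2 by (auto intro: openin_Int)
next
  fix K :: "P1point set set"
  assume K: "\<forall>U\<in>K. U \<subseteq> P1 \<epsilon> \<and> openin (top_of_set (Disc \<epsilon>)) {x \<in> Disc \<epsilon>. chart0 x \<in> U} \<and>
      openin (top_of_set (Disc \<epsilon>)) {y \<in> Disc \<epsilon>. chartInf \<epsilon> y \<in> U}"
  have e1: "{x \<in> Disc \<epsilon>. chart0 x \<in> \<Union>K} = (\<Union>U\<in>K. {x \<in> Disc \<epsilon>. chart0 x \<in> U})" by auto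
  have e2: "{x \<in> Disc \<epsilon>. chartInf \<epsilon> x \<in> \<Union>K} = (\<Union>U\<in>K. {x \<in> Disc \<epsilon>. chartInf \<epsilon> x \<in> U})" by auto
  show "\<Union>K \<subseteq> P1 \<epsilon> \<and> openin (top_of_set (Disc \<epsilon>)) {x \<in> Disc \<epsilon>. chart0 x \<in> \<Union>K} \<and>
      openin (top_of_set (Disc \<epsilon>)) {y \<in> Disc \<epsilon>. chartInf \<epsilon> y \<in> \<Union>K}"
    using K unfolding e1 e2 by (auto intro!: openin_Union)
qed

lemma openin_P1top: "openin (P1top \<epsilon>) U \<longleftrightarrow> U \<subseteq> P1 \<epsilon> \<and>
      openin (top_of_set (Disc \<epsilon>)) {x \<in> Disc \<epsilon>. chart0 x \<in> U} \<and>
      openin (top_of_set (Disc \<epsilon>)) {y \<in> Disc \<epsilon>. chartInf \<epsilon> y \<in> U}"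
  unfolding P1top_def using topology_inverse'[OF istopology_P1top] by simp

lemma chart0_P1: "x \<in> Disc \<epsilon> \<Longrightarrow> chart0 x \<in> P1 \<epsilon>"
  unfolding P1_def by auto

lemma chartInf_P1: "x \<in> Disc \<epsilon> \<Longrightarrow> chartInf \<epsilon> x \<in> P1 \<epsilon>"
  unfolding P1_def by auto

lemma topspace_P1top: "topspace (P1top \<epsilon>) = P1 \<epsilon>"
proof -
  have "openin (P1top \<epsilon>) (P1 \<epsilon>)"
  proof -
    have "{x \<in> Disc \<epsilon>. chart0 x \<in> P1 \<epsilon>} = Disc \<epsilon>" using chart0_P1 by auto
    moreover have "{x \<in> Disc \<epsilon>. chartInf \<epsilon> x \<in> P1 \<epsilon>} = Disc \<epsilon>" using chartInf_P1 by auto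
    ultimately show ?thesis unfolding openin_P1top by simp
  qed
  then have "P1 \<epsilon> \<subseteq> topspace (P1top \<epsilon>)" by (rule openin_subset)
  moreover have "topspace (P1top \<epsilon>) \<subseteq> P1 \<epsilon>"
    unfolding topspace_def using openin_P1top by blast
  ultimately show ?thesis by blast
qed

lemma cont_chart0:
  assumes f: "continuous_map (P1top \<epsilon>) euclideanreal f"
  shows "continuous_on (Disc \<epsilon>) (\<lambda>x. f (chart0 x))"
  unfolding continuous_map_iff_continuous[symmetric] continuous_map_def
proof (intro conjI allI impI)
  show "(\<lambda>x. f (chart0 x)) \<in> topspace (top_of_set (Disc \<epsilon>)) \<rightarrow> topspace euclideanreal" by simp
next
  fix V :: "real set" assume V: "openin euclideanreal V"
  have "openin (P1top \<epsilon>) {p \<in> topspace (P1top \<epsilon>). f p \<in> V}"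
    using f V unfolding continuous_map_def by blast
  then have "openin (top_of_set (Disc \<epsilon>)) {x \<in> Disc \<epsilon>. chart0 x \<in> {p \<in> P1 \<epsilon>. f p \<in> V}}"
    unfolding openin_P1top topspace_P1top by blast
  moreover have "{x \<in> Disc \<epsilon>. chart0 x \<in> {p \<in> P1 \<epsilon>. f p \<in> V}} =
      {x \<in> topspace (top_of_set (Disc \<epsilon>)). f (chart0 x) \<in> V}" using chart0_P1 by auto
  ultimately show "openin (top_of_set (Disc \<epsilon>)) {x \<in> topspace (top_of_set (Disc \<epsilon>)). f (chart0 x) \<in> V}"
    by simp
qed

lemma space_borel_on: "space (borel_on T) = topspace T"
  unfolding borel_on_def by (rule space_measure_of) (auto dest: openin_subset)

lemma sets_borel_on: "sets (borel_on T) = sigma_sets (topspace T) {U. openin T U}"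
  unfolding borel_on_def by (rule sets_measure_of) (auto dest: openin_subset)

lemma f_meas:
  assumes f: "continuous_map T euclideanreal f"
  shows "f \<in> borel_measurable (borel_on T)"
proof (rule borel_measurableI)
  fix S :: "real set" assume "open S"
  then have "openin T {p \<in> topspace T. f p \<in> S}" using f unfolding continuous_map_def by auto
  moreover have "f -` S \<inter> space (borel_on T) = {p \<in> topspace T. f p \<in> S}"
    by (auto simp: space_borel_on)
  ultimately show "f -` S \<inter> space (borel_on T) \<in> sets (borel_on T)"
    unfolding sets_borel_on by auto
qed



lemma istopology_betaN: "istopology (\<lambda>U. U \<subseteq> betaN \<and>
      (\<forall>\<omega>\<in>U. \<exists>A. eventually (\<lambda>n. n \<in> A) \<omega> \<and> {\<nu> \<in> betaN. eventually (\<lambda>n. n \<in> A) \<nu>} \<subseteq> U))"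
  unfolding istopology_def
proof (rule conjI; intro allI impI)
  fix S T :: "nat filter set"
  assume S: "S \<subseteq> betaN \<and> (\<forall>\<omega>\<in>S. \<exists>A. eventually (\<lambda>n. n \<in> A) \<omega> \<and> {\<nu> \<in> betaN. eventually (\<lambda>n. n \<in> A) \<nu>} \<subseteq> S)"
  assume T: "T \<subseteq> betaN \<and> (\<forall>\<omega>\<in>T. \<exists>A. eventually (\<lambda>n. n \<in> A) \<omega> \<and> {\<nu> \<in> betaN. eventually (\<lambda>n. n \<in> A) \<nu>} \<subseteq> T)"
  show "S \<inter> T \<subseteq> betaN \<and> (\<forall>\<omega>\<in>S \<inter> T. \<exists>A. eventually (\<lambda>n. n \<in> A) \<omega> \<and> {\<nu> \<in> betaN. eventually (\<lambda>n. n \<in> A) \<nu>} \<subseteq> S \<inter> T)"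
  proof (intro conjI ballI)
    show "S \<inter> T \<subseteq> betaN" using S by auto
  next
    fix \<omega> assume w: "\<omega> \<in> S \<inter> T"
    obtain A where A: "eventually (\<lambda>n. n \<in> A) \<omega>" "{\<nu> \<in> betaN. eventually (\<lambda>n. n \<in> A) \<nu>} \<subseteq> S"
      using S w by blast
    obtain B where B: "eventually (\<lambda>n. n \<in> B) \<omega>" "{\<nu> \<in> betaN. eventually (\<lambda>n. n \<in> B) \<nu>} \<subseteq> T"
      using T w by blast
    have "eventually (\<lambda>n. n \<in> A \<inter> B) \<omega>" using eventually_conj[OF A(1) B(1)] by simp
    moreover have "{\<nu> \<in> betaN. eventually (\<lambda>n. n \<in> A \<inter> B) \<nu>} \<subseteq> S \<inter> T"
    proof
      fix \<nu> assume "\<nu> \<in> {\<nu> \<in> betaN. eventually (\<lambda>n. n \<in> A \<inter> B) \<nu>}"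
      then have "\<nu> \<in> betaN" "eventually (\<lambda>n. n \<in> A) \<nu>" "eventually (\<lambda>n. n \<in> B) \<nu>"
        by (auto elim: eventually_mono)
      then show "\<nu> \<in> S \<inter> T" using A(2) B(2) by blast
    qed
    ultimately show "\<exists>C. eventually (\<lambda>n. n \<in> C) \<omega> \<and> {\<nu> \<in> betaN. eventually (\<lambda>n. n \<in> C) \<nu>} \<subseteq> S \<inter> T"
      by blast
  qed
next
  fix K :: "nat filter set set"
  assume K: "\<forall>U\<in>K. U \<subseteq> betaN \<and> (\<forall>\<omega>\<in>U. \<exists>A. eventually (\<lambda>n. n \<in> A) \<omega> \<and> {\<nu> \<in> betaN. eventually (\<lambda>n. n \<in> A) \<nu>} \<subseteq> U)"
  show "\<Union>K \<subseteq> betaN \<and> (\<forall>\<omega>\<in>\<Union>K. \<exists>A. eventually (\<lambda>n. n \<in> A) \<omega> \<and> {\<nu> \<in> betaN. eventually (\<lambda>n. n \<in> A) \<nu>} \<subseteq> \<Union>K)"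
  proof (intro conjI ballI)
    show "\<Union>K \<subseteq> betaN" using K by auto
  next
    fix \<omega> assume "\<omega> \<in> \<Union>K"
    then obtain U where U: "U \<in> K" "\<omega> \<in> U" by blast
    then obtain A where "eventually (\<lambda>n. n \<in> A) \<omega>" "{\<nu> \<in> betaN. eventually (\<lambda>n. n \<in> A) \<nu>} \<subseteq> U"
      using K by blast
    then show "\<exists>A. eventually (\<lambda>n. n \<in> A) \<omega> \<and> {\<nu> \<in> betaN. eventually (\<lambda>n. n \<in> A) \<nu>} \<subseteq> \<Union>K"
      using U by blast
  qed
qed

lemma openin_betaN_top: "openin betaN_top U \<longleftrightarrow> U \<subseteq> betaN \<and>
      (\<forall>\<omega>\<in>U. \<exists>A. eventually (\<lambda>n. n \<in> A) \<omega> \<and> {\<nu> \<in> betaN. eventually (\<lambda>n. n \<in> A) \<nu>} \<subseteq> U)"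
  unfolding betaN_top_def using topology_inverse'[OF istopology_betaN] by simp


lemma Disc_eq: "Disc \<epsilon> = {x. (\<forall>P. P \<notin> Apoly \<epsilon> \<longrightarrow> x P = 0) \<and> (\<forall>P. P \<in> Apoly \<epsilon> \<longrightarrow> 0 \<le> x P) \<and>
    x 0 = 0 \<and> x 1 = 1 \<and>
    (\<forall>P Q. P \<in> Apoly \<epsilon> \<longrightarrow> Q \<in> Apoly \<epsilon> \<longrightarrow> x (P + Q) \<le> x P + x Q) \<and>
    (\<forall>P Q. P \<in> Apoly \<epsilon> \<longrightarrow> Q \<in> Apoly \<epsilon> \<longrightarrow> x (P * Q) = x P * x Q) \<and>
    (\<forall>a. a \<in> Aeps \<epsilon> \<longrightarrow> x [:a:] \<le> normA \<epsilon> a) \<and> x [:0, 1:] \<le> 1}"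
  unfolding Disc_def Berk_A1_def by auto

lemma cont_coord: "continuous_on UNIV (\<lambda>x::seminorm. x P)"
  by (rule continuous_on_product_coordinates)

lemma closed_Disc: "closed (Disc \<epsilon>)"
  unfolding Disc_eq
  by (intro closed_Collect_conj closed_Collect_all closed_Collect_imp open_const_set
      closed_Collect_le closed_Collect_eq continuous_on_add continuous_on_mult
      cont_coord continuous_on_const)

definition Cset :: "(nat \<Rightarrow> real) \<Rightarrow> seminorm set" where
  "Cset \<epsilon> = Disc \<epsilon> \<inter> {x. \<forall>P. x P \<in> {0..bP \<epsilon> P}}"

lemma compact_Cset: "compact (Cset \<epsilon>)"
proof -
  have "compactin (product_topology (\<lambda>_. euclidean) UNIV) (Pi\<^sub>E UNIV (\<lambda>P. {0..bP \<epsilon> P}))"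
    by (subst compactin_PiE) (auto simp: compactin_euclidean_iff)
  moreover have "Pi\<^sub>E UNIV (\<lambda>P. {0..bP \<epsilon> P}) = {x. \<forall>P. x P \<in> {0..bP \<epsilon> P}}"
    by (auto simp: PiE_UNIV_domain)
  ultimately have "compact {x::seminorm. \<forall>P. x P \<in> {0..bP \<epsilon> P}}"
    by (simp add: euclidean_product_topology compactin_euclidean_iff)
  then have "compact ({x. \<forall>P. x P \<in> {0..bP \<epsilon> P}} \<inter> Disc \<epsilon>)"
    by (intro compact_Int_closed closed_Disc)
  then show ?thesis unfolding Cset_def by (simp add: Int_commute)
qed

lemma g_meas:
  fixes X :: "real \<Rightarrow> seminorm"
  assumes X: "continuous_on UNIV X" "\<And>t. X t \<in> Disc \<epsilon>"
  shows "(\<lambda>t. chart0 (X t)) \<in> Um \<rightarrow>\<^sub>M borel_on (P1top \<epsilon>)"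
  unfolding borel_on_def
proof (rule measurable_measure_of)
  show "{U. openin (P1top \<epsilon>) U} \<subseteq> Pow (topspace (P1top \<epsilon>))" by (auto dest: openin_subset)
  show "(\<lambda>t. chart0 (X t)) \<in> space Um \<rightarrow> topspace (P1top \<epsilon>)"
    using X(2) chart0_P1 by (auto simp: topspace_P1top)
next
  fix U assume "U \<in> {U. openin (P1top \<epsilon>) U}"
  then have "openin (top_of_set (Disc \<epsilon>)) {x \<in> Disc \<epsilon>. chart0 x \<in> U}"
    unfolding openin_P1top by auto
  then obtain T where T: "open T" "{x \<in> Disc \<epsilon>. chart0 x \<in> U} = Disc \<epsilon> \<inter> T"
    unfolding openin_open by blast
  have "(\<lambda>t. chart0 (X t)) -` U \<inter> space Um = X -` T"
  proof -
    have "chart0 (X t) \<in> U \<longleftrightarrow> X t \<in> T" for t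
    proof -
      have "chart0 (X t) \<in> U \<longleftrightarrow> X t \<in> {x \<in> Disc \<epsilon>. chart0 x \<in> U}" using X(2)[of t] by simp
      also have "\<dots> \<longleftrightarrow> X t \<in> T" using T(2) X(2)[of t] by blast
      finally show ?thesis .
    qed
    then show ?thesis by (intro set_eqI) (simp only: vimage_eq Int_iff space_Um UNIV_I simp_thms)
  qed
  moreover have "open (X -` T)" using X(1) T(1) by (simp add: continuous_on_open_vimage)
  ultimately show "(\<lambda>t. chart0 (X t)) -` U \<inter> space Um \<in> sets Um" by simp
qed


lemma poly_sum_D: fixes p :: "complex poly" assumes "degree p \<le> D" shows "poly p w = (\<Sum>k\<le>D. coeff p k * w ^ k)"
  unfolding poly_altdef using assms by (intro sum.mono_neutral_left) (auto simp: coeff_eq_0)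

lemma poly_lip:
  fixes p :: "complex poly"
  assumes "\<And>k. cmod (coeff p k) \<le> R" "degree p \<le> D" "cmod w \<le> 1" "cmod w' \<le> 1"
  shows "cmod (poly p w - poly p w') \<le> (\<Sum>k\<le>D. R * real k) * cmod (w - w')"
proof -
  have R0: "0 \<le> R" using assms(1)[of 0] norm_ge_zero[of "coeff p 0"] by linarith
  have "poly p w - poly p w' = (\<Sum>k\<le>D. coeff p k * (w ^ k - w' ^ k))"
    using assms(2) by (simp add: poly_sum_D sum_subtractf[symmetric] algebra_simps)
  then have "cmod (poly p w - poly p w') \<le> (\<Sum>k\<le>D. cmod (coeff p k * (w ^ k - w' ^ k)))"
    by (simp add: norm_sum)
  also have "\<dots> \<le> (\<Sum>k\<le>D. R * (real k * cmod (w - w')))"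
  proof (intro sum_mono)
    fix k
    have "cmod (w ^ k - w' ^ k) \<le> real k * cmod (w - w')" using assms(3,4) by (rule norm_power_diff)
    then show "cmod (coeff p k * (w ^ k - w' ^ k)) \<le> R * (real k * cmod (w - w'))"
      unfolding norm_mult using assms(1)[of k] R0 by (intro mult_mono) auto
  qed
  also have "\<dots> = (\<Sum>k\<le>D. R * real k) * cmod (w - w')" by (subst sum_distrib_right) (simp add: mult.assoc)
  finally show ?thesis .
qed

context
  fixes \<epsilon> :: "nat \<Rightarrow> real"
  assumes eps: "\<forall>n. 0 < \<epsilon> n \<and> \<epsilon> n \<le> 1"
begin

lemma eposE: "0 < \<epsilon> n" using eps by auto
lemma ele1E: "\<epsilon> n \<le> 1" using eps by auto

definition Gn :: "seq poly \<Rightarrow> nat \<Rightarrow> complex \<Rightarrow> real" where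
  "Gn P n w = cmod (poly (cp P n) w) powr \<epsilon> n"

lemma const_Aeps_abs1:
  assumes U: "ultrafilter_on_nat \<omega>" and w: "cmod w = 1"
  shows "absw \<epsilon> \<omega> (\<lambda>_. w) = 1"
  using lim_unique_ultra[OF U absw_const_tends[OF eps U, of w]] w by simp

lemma evalpt_sphere_Disc:
  assumes U: "ultrafilter_on_nat \<omega>" and w: "cmod w = 1"
  shows "evalpt \<epsilon> \<omega> (\<lambda>_. w) \<in> Disc \<epsilon>"
  by (rule evalpt_Disc[OF eps U Aeps_const[OF eps]]) (simp add: const_Aeps_abs1[OF U w])

lemma evalpt_tends:
  assumes U: "ultrafilter_on_nat \<omega>" and P: "P \<in> Apoly \<epsilon>"
  shows "((\<lambda>n. Gn P n w) \<longlongrightarrow> evalpt \<epsilon> \<omega> (\<lambda>_. w) P) \<omega>"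
  using abs_poly_tends[OF eps U P Aeps_const[OF eps, of w]] P unfolding Gn_def evalpt_def by simp

lemma evalpt_principal:
  assumes P: "P \<in> Apoly \<epsilon>"
  shows "evalpt \<epsilon> (principal {n}) (\<lambda>_. w) P = Gn P n w"
  using P unfolding evalpt_def Gn_def by (simp add: absw_principal[OF eps] poly_cp)

lemma Gn_bound: "P \<in> Apoly \<epsilon> \<Longrightarrow> cmod w \<le> 1 \<Longrightarrow> Gn P n w \<le> bP \<epsilon> P"
proof -
  assume P: "P \<in> Apoly \<epsilon>" and w: "cmod w \<le> 1"
  have "Gn P n w \<le> N1 (cp P n) powr \<epsilon> n"
    unfolding Gn_def using poly_le_N1[OF w] eposE[of n] by (intro powr_mono2) auto
  also have "\<dots> \<le> bP \<epsilon> P" by (rule N1_cp_bound[OF eps P])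
  finally show ?thesis .
qed

lemma evalpt_Cset:
  assumes U: "ultrafilter_on_nat \<omega>" and w: "cmod w = 1"
  shows "evalpt \<epsilon> \<omega> (\<lambda>_. w) \<in> Cset \<epsilon>"
  unfolding Cset_def
proof (intro IntI CollectI allI)
  show "evalpt \<epsilon> \<omega> (\<lambda>_. w) \<in> Disc \<epsilon>" by (rule evalpt_sphere_Disc[OF U w])
next
  fix P
  show "evalpt \<epsilon> \<omega> (\<lambda>_. w) P \<in> {0..bP \<epsilon> P}"
  proof (cases "P \<in> Apoly \<epsilon>")
    case True
    have "0 \<le> evalpt \<epsilon> \<omega> (\<lambda>_. w) P"
      using lim_le_ultra[OF U tendsto_const evalpt_tends[OF U True]] by (auto simp: Gn_def)
    moreover have "evalpt \<epsilon> \<omega> (\<lambda>_. w) P \<le> bP \<epsilon> P"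
      using lim_le_ultra[OF U evalpt_tends[OF U True] tendsto_const] Gn_bound[OF True] w by auto
    ultimately show ?thesis by simp
  next
    case False then show ?thesis by (simp add: evalpt_def bP_def[OF eps])
  qed
qed

lemma gauss_Cset:
  assumes U: "ultrafilter_on_nat \<omega>" and na: "\<not> archimedean_at \<epsilon> \<omega>"
  shows "gauss \<epsilon> \<omega> \<in> Cset \<epsilon>"
  unfolding Cset_def
proof (intro IntI CollectI allI)
  show "gauss \<epsilon> \<omega> \<in> Disc \<epsilon>" by (rule gauss_Disc[OF eps U na])
  fix P
  have "0 \<le> gauss \<epsilon> \<omega> P" using gauss_Disc[OF eps U na] unfolding Disc_eq
    by (cases "P \<in> Apoly \<epsilon>") auto
  then show "gauss \<epsilon> \<omega> P \<in> {0..bP \<epsilon> P}" using gauss_bP[OF eps U na] by simp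
qed

lemma arch_e:
  assumes U: "ultrafilter_on_nat \<omega>" and ar: "archimedean_at \<epsilon> \<omega>"
  shows "\<exists>e>0. eventually (\<lambda>n. e \<le> \<epsilon> n) \<omega>"
proof -
  let ?A = "absw \<epsilon> \<omega> (\<lambda>_. 2)"
  have t: "((\<lambda>n. 2 powr \<epsilon> n) \<longlongrightarrow> ?A) \<omega>" using absw_const_tends[OF eps U, of 2] by simp
  have A1: "1 < ?A" using ar unfolding archimedean_at_def by simp
  define m where "m = (1 + ?A) / 2"
  have m: "1 < m" "m < ?A" using A1 unfolding m_def by auto
  have ev: "eventually (\<lambda>n. m < 2 powr \<epsilon> n) \<omega>" using order_tendstoD(1)[OF t m(2)] .
  define e where "e = log 2 m"
  have e0: "0 < e" unfolding e_def using m by simp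
  have "eventually (\<lambda>n. e \<le> \<epsilon> n) \<omega>"
  proof (rule eventually_mono[OF ev])
    fix n assume "m < 2 powr \<epsilon> n"
    then have "log 2 m < log 2 (2 powr \<epsilon> n)" using m by (subst log_less_cancel_iff) auto
    then show "e \<le> \<epsilon> n" unfolding e_def by simp
  qed
  then show ?thesis using e0 by blast
qed

lemma coeff_small:
  assumes a: "a \<in> Aeps \<epsilon>" and e: "0 < e" "e \<le> \<epsilon> n"
  shows "cmod (a n) \<le> max 1 (normA \<epsilon> a powr (1/e))"
proof (cases "cmod (a n) \<le> 1")
  case True then show ?thesis by simp
next
  case False
  have "cmod (a n) powr e \<le> cmod (a n) powr \<epsilon> n" using False e by (intro powr_mono) auto
  also have "\<dots> \<le> normA \<epsilon> a" by (rule Aeps_le[OF eps a])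
  finally have "(cmod (a n) powr e) powr (1/e) \<le> normA \<epsilon> a powr (1/e)"
    using e by (intro powr_mono2) auto
  then have "cmod (a n) \<le> normA \<epsilon> a powr (1/e)" using e False by (simp add: powr_powr)
  then show ?thesis by simp
qed

lemma arch_coeff_bound:
  assumes U: "ultrafilter_on_nat \<omega>" and ar: "archimedean_at \<epsilon> \<omega>" and P: "P \<in> Apoly \<epsilon>"
  shows "\<exists>e R. 0 < e \<and> 0 \<le> R \<and> eventually (\<lambda>n. e \<le> \<epsilon> n \<and> (\<forall>k. cmod (coeff (cp P n) k) \<le> R)) \<omega>"
proof -
  obtain e where e: "0 < e" "eventually (\<lambda>n. e \<le> \<epsilon> n) \<omega>" using arch_e[OF U ar] by blast
  define R where "R = (\<Sum>k\<le>degree P. max 1 (normA \<epsilon> (coeff P k) powr (1/e)))"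
  have R0: "0 \<le> R" unfolding R_def by (intro sum_nonneg) auto
  have "eventually (\<lambda>n. e \<le> \<epsilon> n \<and> (\<forall>k. cmod (coeff (cp P n) k) \<le> R)) \<omega>"
  proof (rule eventually_mono[OF e(2)], intro conjI allI)
    fix n k assume en: "e \<le> \<epsilon> n"
    then show "e \<le> \<epsilon> n" .
    show "cmod (coeff (cp P n) k) \<le> R"
    proof (cases "k \<le> degree P")
      case True
      have "cmod (coeff P k n) \<le> max 1 (normA \<epsilon> (coeff P k) powr (1/e))"
        using coeff_small[OF coeff_Aeps[OF eps P] e(1) en] .
      also have "\<dots> \<le> R" unfolding R_def using True
        by (intro member_le_sum[of k "{..degree P}" "\<lambda>k. max 1 (normA \<epsilon> (coeff P k) powr (1/e))"]) auto
      finally show ?thesis by (simp add: coeff_cp)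
    next
      case False then show ?thesis using R0 by (simp add: coeff_cp coeff_eq_0)
    qed
  qed
  then show ?thesis using e(1) R0 by blast
qed

lemma arch_equi:
  assumes U: "ultrafilter_on_nat \<omega>" and ar: "archimedean_at \<epsilon> \<omega>" and P: "P \<in> Apoly \<epsilon>" and d: "0 < \<delta>"
  shows "\<exists>\<rho>>0. eventually (\<lambda>n. \<forall>w\<in>cball 0 1. \<forall>w'\<in>cball 0 1. cmod (w - w') < \<rho> \<longrightarrow>
            \<bar>Gn P n w - Gn P n w'\<bar> \<le> \<delta>) \<omega>"
proof -
  obtain e R where eR: "0 < e" "0 \<le> R" "eventually (\<lambda>n. e \<le> \<epsilon> n \<and> (\<forall>k. cmod (coeff (cp P n) k) \<le> R)) \<omega>"
    using arch_coeff_bound[OF U ar P] by blast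
  define D where "D = degree P"
  define L where "L = (\<Sum>k\<le>D. R * real k)"
  have L0: "0 \<le> L" unfolding L_def using eR by (intro sum_nonneg) auto
  define q where "q = min 1 \<delta> powr (1/e)"
  have q0: "0 < q" unfolding q_def using d by simp
  have q1: "q \<le> 1" unfolding q_def using d eR by (intro powr_le1) auto
  have qe: "q powr e \<le> \<delta>" unfolding q_def using d eR by (simp add: powr_powr)
  define \<rho> where "\<rho> = q / (L + 1)"
  have r0: "0 < \<rho>" unfolding \<rho>_def using q0 L0 by simp
  have Lr: "L * \<rho> \<le> q" unfolding \<rho>_def using q0 L0 by (simp add: field_simps)
  have "eventually (\<lambda>n. \<forall>w\<in>cball 0 1. \<forall>w'\<in>cball 0 1. cmod (w - w') < \<rho> \<longrightarrow>
            \<bar>Gn P n w - Gn P n w'\<bar> \<le> \<delta>) \<omega>"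
  proof (rule eventually_mono[OF eR(3)], intro ballI impI)
    fix n w w'
    assume n: "e \<le> \<epsilon> n \<and> (\<forall>k. cmod (coeff (cp P n) k) \<le> R)"
      and w: "w \<in> cball 0 1" and w': "w' \<in> cball 0 1" and ww: "cmod (w - w') < \<rho>"
    have lip: "cmod (poly (cp P n) w - poly (cp P n) w') \<le> L * cmod (w - w')"
      unfolding L_def using n w w' degree_cp[of P n] unfolding D_def
      by (intro poly_lip) auto
    define t where "t = L * cmod (w - w')"
    have t0: "0 \<le> t" unfolding t_def using L0 by simp
    have tq: "t \<le> q" unfolding t_def using Lr ww L0 by (meson less_imp_le mult_left_mono order.trans)
    have "\<bar>Gn P n w - Gn P n w'\<bar> \<le> \<bar>cmod (poly (cp P n) w) - cmod (poly (cp P n) w')\<bar> powr \<epsilon> n"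
      unfolding Gn_def using eposE[of n] ele1E[of n] by (intro powr_diff_le) auto
    also have "\<dots> \<le> t powr \<epsilon> n"
      unfolding t_def using eposE[of n] lip norm_triangle_ineq3
      by (intro powr_mono2) (auto intro: order.trans)
    also have "\<dots> \<le> t powr e"
    proof (cases "t = 0")
      case True then show ?thesis by simp
    next
      case False
      then show ?thesis using t0 tq q1 n by (intro powr_mono') auto
    qed
    also have "\<dots> \<le> q powr e" using t0 tq eR by (intro powr_mono2) auto
    also have "\<dots> \<le> \<delta>" by (rule qe)
    finally show "\<bar>Gn P n w - Gn P n w'\<bar> \<le> \<delta>" .
  qed
  then show ?thesis using r0 by blast
qed

lemma arch_G_mod:
  assumes U: "ultrafilter_on_nat \<omega>" and ar: "archimedean_at \<epsilon> \<omega>" and P: "P \<in> Apoly \<epsilon>" and d: "0 < \<delta>"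
  shows "\<exists>\<rho>>0. (\<forall>w\<in>cball 0 1. \<forall>w'\<in>cball 0 1. cmod (w - w') < \<rho> \<longrightarrow>
            \<bar>evalpt \<epsilon> \<omega> (\<lambda>_. w) P - evalpt \<epsilon> \<omega> (\<lambda>_. w') P\<bar> \<le> \<delta>) \<and>
         eventually (\<lambda>n. \<forall>w\<in>cball 0 1. \<forall>w'\<in>cball 0 1. cmod (w - w') < \<rho> \<longrightarrow>
            \<bar>Gn P n w - Gn P n w'\<bar> \<le> \<delta>) \<omega>"
proof -
  obtain \<rho> where r: "\<rho> > 0" "eventually (\<lambda>n. \<forall>w\<in>cball 0 1. \<forall>w'\<in>cball 0 1. cmod (w - w') < \<rho> \<longrightarrow>
            \<bar>Gn P n w - Gn P n w'\<bar> \<le> \<delta>) \<omega>" using arch_equi[OF U ar P d] by blast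
  have "\<forall>w\<in>cball 0 1. \<forall>w'\<in>cball 0 1. cmod (w - w') < \<rho> \<longrightarrow>
            \<bar>evalpt \<epsilon> \<omega> (\<lambda>_. w) P - evalpt \<epsilon> \<omega> (\<lambda>_. w') P\<bar> \<le> \<delta>"
  proof (intro ballI impI)
    fix w w' assume w: "w \<in> cball (0::complex) 1" and w': "w' \<in> cball (0::complex) 1" and ww: "cmod (w - w') < \<rho>"
    have "((\<lambda>n. \<bar>Gn P n w - Gn P n w'\<bar>) \<longlongrightarrow> \<bar>evalpt \<epsilon> \<omega> (\<lambda>_. w) P - evalpt \<epsilon> \<omega> (\<lambda>_. w') P\<bar>) \<omega>"
      by (intro tendsto_intros evalpt_tends[OF U P])
    moreover have "eventually (\<lambda>n. \<bar>Gn P n w - Gn P n w'\<bar> \<le> \<delta>) \<omega>"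
      using r(2) by eventually_elim (use w w' ww in auto)
    ultimately show "\<bar>evalpt \<epsilon> \<omega> (\<lambda>_. w) P - evalpt \<epsilon> \<omega> (\<lambda>_. w') P\<bar> \<le> \<delta>"
      using lim_le_ultra[OF U _ tendsto_const] by blast
  qed
  then show ?thesis using r by blast
qed

end


lemma int_Um_cont:
  assumes "continuous_on UNIV u" "\<And>t. \<bar>u t\<bar> \<le> B"
  shows "integrable Um (u :: real \<Rightarrow> real)"
proof (rule finite_measure.integrable_const_bound[OF Um_fin])
  show "AE x in Um. norm (u x) \<le> B" by (rule AE_I2) (use assms(2) in simp)
  have "u \<in> borel_measurable borel" using assms(1) by (rule borel_measurable_continuous_onI)
  moreover have "measurable Um borel = measurable borel (borel :: real measure)"
    by (rule measurable_cong_sets) simp_all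
  ultimately show "u \<in> borel_measurable Um" by simp
qed

lemma int_Um_diff:
  fixes a b :: "real \<Rightarrow> real"
  assumes "integrable Um a" "integrable Um b" "\<And>t. \<bar>a t - b t\<bar> \<le> c"
  shows "\<bar>(\<integral>t. a t \<partial>Um) - (\<integral>t. b t \<partial>Um)\<bar> \<le> c"
proof -
  interpret pr: prob_space Um by (rule Um_prob)
  have "(\<integral>t. a t \<partial>Um) - (\<integral>t. b t \<partial>Um) = (\<integral>t. a t - b t \<partial>Um)"
    using assms by (simp add: Bochner_Integration.integral_diff)
  also have "norm \<dots> \<le> (\<integral>t. c \<partial>Um)"
  proof (rule Bochner_Integration.integral_norm_bound_integral)
    show "integrable Um (\<lambda>t. a t - b t)" using assms by (intro Bochner_Integration.integrable_diff)
    show "integrable Um (\<lambda>t. c)" by (rule pr.integrable_const)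
    fix t show "norm (a t - b t) \<le> c" using assms(3)[of t] by simp
  qed
  also have "\<dots> = c" using pr.prob_space by simp
  finally show ?thesis by simp
qed

lemma cis_sphere: "cis t \<in> sphere (0::complex) 1" by simp

context
  fixes \<epsilon> :: "nat \<Rightarrow> real"
  assumes eps: "\<forall>n. 0 < \<epsilon> n \<and> \<epsilon> n \<le> 1"
begin

lemma epos5: "0 < \<epsilon> n" using eps by auto

lemma principal_arch: "archimedean_at \<epsilon> (principal {n})"
  unfolding archimedean_at_def absw_principal[OF eps] using epos5[of n]
  by (simp add: gr_one_powr)

lemma arch_unif:
  assumes U: "ultrafilter_on_nat \<omega>" and ar: "archimedean_at \<epsilon> \<omega>" and P: "P \<in> Apoly \<epsilon>" and d: "0 < \<delta>"
  shows "eventually (\<lambda>n. \<forall>w\<in>sphere 0 1. \<bar>Gn \<epsilon> P n w - evalpt \<epsilon> \<omega> (\<lambda>_. w) P\<bar> \<le> \<delta>) \<omega>"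
proof -
  have d3: "0 < \<delta>/3" using d by simp
  obtain \<rho> where r: "\<rho> > 0"
    "\<forall>w\<in>cball 0 1. \<forall>w'\<in>cball 0 1. cmod (w - w') < \<rho> \<longrightarrow>
            \<bar>evalpt \<epsilon> \<omega> (\<lambda>_. w) P - evalpt \<epsilon> \<omega> (\<lambda>_. w') P\<bar> \<le> \<delta>/3"
    "eventually (\<lambda>n. \<forall>w\<in>cball 0 1. \<forall>w'\<in>cball 0 1. cmod (w - w') < \<rho> \<longrightarrow>
            \<bar>Gn \<epsilon> P n w - Gn \<epsilon> P n w'\<bar> \<le> \<delta>/3) \<omega>"
    using arch_G_mod[OF eps U ar P d3] by blast
  have op: "\<And>c. c \<in> sphere (0::complex) 1 \<Longrightarrow> open (ball c \<rho>)" by simp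
  have cov: "sphere (0::complex) 1 \<subseteq> \<Union>((\<lambda>c. ball c \<rho>) ` sphere 0 1)" using r(1) by force
  obtain N where N: "N \<subseteq> sphere 0 1" "finite N" "sphere (0::complex) 1 \<subseteq> \<Union>((\<lambda>c. ball c \<rho>) ` N)"
    by (rule compactE_image[OF compact_sphere op cov]) blast
  have evN: "eventually (\<lambda>n. \<forall>c\<in>N. \<bar>Gn \<epsilon> P n c - evalpt \<epsilon> \<omega> (\<lambda>_. c) P\<bar> < \<delta>/3) \<omega>"
  proof (rule eventually_ball_finite[OF N(2)], intro ballI)
    fix c assume "c \<in> N"
    have "((\<lambda>n. Gn \<epsilon> P n c) \<longlongrightarrow> evalpt \<epsilon> \<omega> (\<lambda>_. c) P) \<omega>" by (rule evalpt_tends[OF eps U P])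
    from tendstoD[OF this d3] show "eventually (\<lambda>n. \<bar>Gn \<epsilon> P n c - evalpt \<epsilon> \<omega> (\<lambda>_. c) P\<bar> < \<delta>/3) \<omega>"
      by (simp add: dist_real_def)
  qed
  show ?thesis
    using evN r(3)
  proof eventually_elim
    case (elim n)
    show ?case
    proof
      fix w :: complex assume w: "w \<in> sphere 0 1"
      obtain c where c: "c \<in> N" "w \<in> ball c \<rho>" using N(3) w by blast
      have cs: "c \<in> cball 0 1" "w \<in> cball 0 1" using c N(1) w by auto
      have cw: "cmod (w - c) < \<rho>" using c(2) by (simp add: dist_norm norm_minus_commute)
      have cw': "cmod (c - w) < \<rho>" using c(2) by (simp add: dist_norm)
      have 1: "\<bar>Gn \<epsilon> P n w - Gn \<epsilon> P n c\<bar> \<le> \<delta>/3" using elim(2) cs cw by blast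
      have 2: "\<bar>Gn \<epsilon> P n c - evalpt \<epsilon> \<omega> (\<lambda>_. c) P\<bar> < \<delta>/3" using elim(1) c by blast
      have 3: "\<bar>evalpt \<epsilon> \<omega> (\<lambda>_. c) P - evalpt \<epsilon> \<omega> (\<lambda>_. w) P\<bar> \<le> \<delta>/3" using r(2) cs cw' by blast
      show "\<bar>Gn \<epsilon> P n w - evalpt \<epsilon> \<omega> (\<lambda>_. w) P\<bar> \<le> \<delta>" using 1 2 3 by linarith
    qed
  qed
qed

lemma evalpt_cont:
  assumes U: "ultrafilter_on_nat \<omega>" and ar: "archimedean_at \<epsilon> \<omega>"
  shows "continuous_on (sphere 0 1) (\<lambda>w. evalpt \<epsilon> \<omega> (\<lambda>_. w))"
proof (rule continuous_on_coordinatewise_then_product)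
  fix P
  show "continuous_on (sphere 0 1) (\<lambda>w. evalpt \<epsilon> \<omega> (\<lambda>_. w) P)"
  proof (cases "P \<in> Apoly \<epsilon>")
    case False then show ?thesis by (simp add: evalpt_def)
  next
    case True
    show ?thesis unfolding continuous_on_iff
    proof (intro ballI allI impI)
      fix x :: complex and e :: real assume x: "x \<in> sphere 0 1" and e: "0 < e"
      obtain \<rho> where r: "\<rho> > 0"
        "\<forall>w\<in>cball 0 1. \<forall>w'\<in>cball 0 1. cmod (w - w') < \<rho> \<longrightarrow>
            \<bar>evalpt \<epsilon> \<omega> (\<lambda>_. w) P - evalpt \<epsilon> \<omega> (\<lambda>_. w') P\<bar> \<le> e/2"
        using arch_G_mod[OF eps U ar True, of "e/2"] e by auto
      show "\<exists>d>0. \<forall>x'\<in>sphere 0 1. dist x' x < d \<longrightarrow>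
          dist (evalpt \<epsilon> \<omega> (\<lambda>_. x') P) (evalpt \<epsilon> \<omega> (\<lambda>_. x) P) < e"
      proof (intro exI conjI ballI impI)
        fix x' :: complex assume x': "x' \<in> sphere 0 1" and d: "dist x' x < \<rho>"
        have "\<bar>evalpt \<epsilon> \<omega> (\<lambda>_. x') P - evalpt \<epsilon> \<omega> (\<lambda>_. x) P\<bar> \<le> e/2"
          using r(2) x x' d by (auto simp: dist_norm)
        then show "dist (evalpt \<epsilon> \<omega> (\<lambda>_. x') P) (evalpt \<epsilon> \<omega> (\<lambda>_. x) P) < e"
          using e by (simp add: dist_real_def)
      qed (rule r(1))
    qed
  qed
qed

lemma comp_cont:
  fixes h :: "seminorm \<Rightarrow> real"
  assumes U: "ultrafilter_on_nat \<omega>" and ar: "archimedean_at \<epsilon> \<omega>" and h: "continuous_on (Disc \<epsilon>) h"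
  shows "continuous_on UNIV (\<lambda>t. evalpt \<epsilon> \<omega> (\<lambda>_. cis t))"
    and "continuous_on UNIV (\<lambda>t. h (evalpt \<epsilon> \<omega> (\<lambda>_. cis t)))"
    and "\<exists>B. \<forall>t. \<bar>h (evalpt \<epsilon> \<omega> (\<lambda>_. cis t))\<bar> \<le> B"
proof -
  show c1: "continuous_on UNIV (\<lambda>t. evalpt \<epsilon> \<omega> (\<lambda>_. cis t))"
    by (rule continuous_on_compose2[OF evalpt_cont[OF U ar] continuous_on_cis[OF continuous_on_id]])
      auto
  show "continuous_on UNIV (\<lambda>t. h (evalpt \<epsilon> \<omega> (\<lambda>_. cis t)))"
    by (rule continuous_on_compose2[OF h c1]) (auto intro: evalpt_sphere_Disc[OF eps U])
  let ?K = "(\<lambda>w. evalpt \<epsilon> \<omega> (\<lambda>_. w)) ` sphere 0 1"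
  have K: "compact ?K" by (intro compact_continuous_image evalpt_cont[OF U ar] compact_sphere)
  have KD: "?K \<subseteq> Disc \<epsilon>" using evalpt_sphere_Disc[OF eps U] by auto
  have "compact (h ` ?K)" by (intro compact_continuous_image K continuous_on_subset[OF h KD])
  then have "bounded (h ` ?K)" by (rule compact_imp_bounded)
  then obtain B where B: "\<forall>y\<in>h ` ?K. norm y \<le> B" unfolding bounded_iff by blast
  show "\<exists>B. \<forall>t. \<bar>h (evalpt \<epsilon> \<omega> (\<lambda>_. cis t))\<bar> \<le> B"
  proof (intro exI allI)
    fix t
    have "evalpt \<epsilon> \<omega> (\<lambda>_. cis t) \<in> ?K" by (intro imageI) simp
    then show "\<bar>h (evalpt \<epsilon> \<omega> (\<lambda>_. cis t))\<bar> \<le> B" using B by auto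
  qed
qed

lemma int_evalpt:
  fixes h :: "seminorm \<Rightarrow> real"
  assumes U: "ultrafilter_on_nat \<omega>" and ar: "archimedean_at \<epsilon> \<omega>" and h: "continuous_on (Disc \<epsilon>) h"
  shows "integrable Um (\<lambda>t. h (evalpt \<epsilon> \<omega> (\<lambda>_. cis t)))"
proof -
  obtain B where "\<forall>t. \<bar>h (evalpt \<epsilon> \<omega> (\<lambda>_. cis t))\<bar> \<le> B" using comp_cont(3)[OF U ar h] by blast
  then show ?thesis using comp_cont(2)[OF U ar h] by (intro int_Um_cont) auto
qed

theorem arch_conv:
  fixes h :: "seminorm \<Rightarrow> real"
  assumes U: "ultrafilter_on_nat \<omega>" and ar: "archimedean_at \<epsilon> \<omega>" and h: "continuous_on (Disc \<epsilon>) h"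
  shows "((\<lambda>n. \<integral>t. h (evalpt \<epsilon> (principal {n}) (\<lambda>_. cis t)) \<partial>Um) \<longlongrightarrow>
          (\<integral>t. h (evalpt \<epsilon> \<omega> (\<lambda>_. cis t)) \<partial>Um)) \<omega>"
proof (rule tendstoI)
  fix \<eta> :: real assume eta: "0 < \<eta>"
  let ?K = "(\<lambda>w. evalpt \<epsilon> \<omega> (\<lambda>_. w)) ` sphere 0 1"
  have K: "compact ?K" by (intro compact_continuous_image evalpt_cont[OF U ar] compact_sphere)
  have KD: "?K \<subseteq> Disc \<epsilon>" using evalpt_sphere_Disc[OF eps U] by auto
  obtain F \<delta> where Fd: "finite F" "0 < \<delta>"
    "\<forall>k\<in>?K. \<forall>y\<in>Disc \<epsilon>. (\<forall>i\<in>F. \<bar>y i - k i\<bar> < \<delta>) \<longrightarrow> \<bar>h y - h k\<bar> < \<eta>/2"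
    using uc_compact[OF K KD h, of "\<eta>/2"] eta by auto
  have d2: "0 < \<delta>/2" using Fd by simp
  have ev: "eventually (\<lambda>n. \<forall>P\<in>F. \<forall>w\<in>sphere 0 1.
      \<bar>evalpt \<epsilon> (principal {n}) (\<lambda>_. w) P - evalpt \<epsilon> \<omega> (\<lambda>_. w) P\<bar> < \<delta>) \<omega>"
  proof (rule eventually_ball_finite[OF Fd(1)], intro ballI)
    fix P assume "P \<in> F"
    show "eventually (\<lambda>n. \<forall>w\<in>sphere 0 1.
      \<bar>evalpt \<epsilon> (principal {n}) (\<lambda>_. w) P - evalpt \<epsilon> \<omega> (\<lambda>_. w) P\<bar> < \<delta>) \<omega>"
    proof (cases "P \<in> Apoly \<epsilon>")
      case False then show ?thesis using Fd(2) by (simp add: evalpt_def)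
    next
      case True
      show ?thesis using arch_unif[OF U ar True d2]
      proof eventually_elim
        case (elim n)
        then show ?case using Fd(2) by (auto simp: evalpt_principal[OF eps True])
      qed
    qed
  qed
  show "eventually (\<lambda>n. dist (\<integral>t. h (evalpt \<epsilon> (principal {n}) (\<lambda>_. cis t)) \<partial>Um)
      (\<integral>t. h (evalpt \<epsilon> \<omega> (\<lambda>_. cis t)) \<partial>Um) < \<eta>) \<omega>"
    using ev
  proof eventually_elim
    case (elim n)
    have Un: "ultrafilter_on_nat (principal {n})" by (rule ultra_principal)
    have "\<bar>(\<integral>t. h (evalpt \<epsilon> (principal {n}) (\<lambda>_. cis t)) \<partial>Um) - (\<integral>t. h (evalpt \<epsilon> \<omega> (\<lambda>_. cis t)) \<partial>Um)\<bar>
        \<le> \<eta>/2"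
    proof (rule int_Um_diff[OF int_evalpt[OF Un principal_arch h] int_evalpt[OF U ar h]])
      fix t
      have k: "evalpt \<epsilon> \<omega> (\<lambda>_. cis t) \<in> ?K" by (intro imageI) simp
      have y: "evalpt \<epsilon> (principal {n}) (\<lambda>_. cis t) \<in> Disc \<epsilon>" by (rule evalpt_sphere_Disc[OF eps Un]) simp
      have "\<forall>i\<in>F. \<bar>evalpt \<epsilon> (principal {n}) (\<lambda>_. cis t) i - evalpt \<epsilon> \<omega> (\<lambda>_. cis t) i\<bar> < \<delta>"
        using elim by simp
      then have "\<bar>h (evalpt \<epsilon> (principal {n}) (\<lambda>_. cis t)) - h (evalpt \<epsilon> \<omega> (\<lambda>_. cis t))\<bar> < \<eta>/2"
        using Fd(3) k y by blast
      then show "\<bar>h (evalpt \<epsilon> (principal {n}) (\<lambda>_. cis t)) - h (evalpt \<epsilon> \<omega> (\<lambda>_. cis t))\<bar> \<le> \<eta>/2"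
        by simp
    qed
    then show ?case using eta by (simp add: dist_real_def)
  qed
qed

end


lemma int_Um_bound:
  fixes a :: "real \<Rightarrow> real"
  assumes a: "integrable Um a" and B: "B \<in> sets Um" and K: "0 \<le> K"
    and bd: "\<And>t. \<bar>a t - c\<bar> \<le> e + K * indicator B t"
  shows "\<bar>(\<integral>t. a t \<partial>Um) - c\<bar> \<le> e + K * measure Um B"
proof -
  interpret pr: prob_space Um by (rule Um_prob)
  have "emeasure Um B \<noteq> \<infinity>" by (simp add: pr.emeasure_eq_measure)
  then have iB: "integrable Um (indicat_real B)"
    using B by (intro integrable_real_indicator) (auto simp: less_top[symmetric])
  have "(\<integral>t. a t \<partial>Um) - c = (\<integral>t. a t - c \<partial>Um)"
    using a pr.prob_space by (simp add: Bochner_Integration.integral_diff)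
  also have "norm \<dots> \<le> (\<integral>t. e + K * indicator B t \<partial>Um)"
  proof (rule Bochner_Integration.integral_norm_bound_integral)
    show "integrable Um (\<lambda>t. a t - c)" using a by (intro Bochner_Integration.integrable_diff pr.integrable_const)
    show "integrable Um (\<lambda>t. e + K * indicat_real B t)"
      using iB by (intro Bochner_Integration.integrable_add pr.integrable_const integrable_mult_right)
    fix t show "norm (a t - c) \<le> e + K * indicat_real B t" using bd[of t] by simp
  qed
  also have "\<dots> = e + K * measure Um B"
  proof -
    have "(\<integral>t. e + K * indicator B t \<partial>Um) = (\<integral>t. e \<partial>Um) + (\<integral>t. K * indicator B t \<partial>Um)"
      using iB by (intro Bochner_Integration.integral_add pr.integrable_const integrable_mult_right)
    also have "\<dots> = e + K * measure Um B" using pr.prob_space by (simp add: integral_indicator)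
    finally show ?thesis .
  qed
  finally show ?thesis by simp
qed

context
  fixes \<epsilon> :: "nat \<Rightarrow> real"
  assumes eps: "\<forall>n. 0 < \<epsilon> n \<and> \<epsilon> n \<le> 1"
begin

lemma eposF: "0 < \<epsilon> n" using eps by auto

definition Bset :: "real \<Rightarrow> seq poly \<Rightarrow> nat \<Rightarrow> real set" where
  "Bset \<rho> P n = (if P \<in> Apoly \<epsilon> then
     {t. cmod (poly (cp P n) (cis t)) < (\<rho>/3) ^ degree P * N1 (cp P n)} else {})"

lemma Bset_sets: fixes \<rho> :: real shows "Bset \<rho> P n \<in> sets Um"
proof (cases "P \<in> Apoly \<epsilon>")
  case True
  have "open {t. cmod (poly (cp P n) (cis t)) < (\<rho>/3) ^ degree P * N1 (cp P n)}"
    by (intro open_Collect_less continuous_intros)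
  then show ?thesis using True by (simp add: Bset_def)
next
  case False then show ?thesis by (simp add: Bset_def)
qed

lemma Bset_measure: fixes \<rho> :: real assumes "0 < \<rho>" "\<rho> \<le> 1"
  shows "measure Um (Bset \<rho> P n) \<le> 16 * real (degree P) * \<rho>"
proof (cases "P \<in> Apoly \<epsilon>")
  case True
  have "measure Um {t. cmod (poly (cp P n) (cis t)) < (\<rho>/3) ^ degree P * N1 (cp P n)} \<le> 16 * real (degree P) * \<rho>"
    using bad_set[OF degree_cp assms] .
  then show ?thesis using True by (simp add: Bset_def)
next
  case False then show ?thesis using assms by (simp add: Bset_def)
qed

lemma nonarch_good:
  assumes U: "ultrafilter_on_nat \<omega>" and na: "\<not> archimedean_at \<epsilon> \<omega>" and r: "0 < \<rho>" "\<rho> \<le> 1" and d: "0 < \<delta>"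
  shows "eventually (\<lambda>n. \<forall>t. t \<notin> Bset \<rho> P n \<longrightarrow>
     \<bar>evalpt \<epsilon> (principal {n}) (\<lambda>_. cis t) P - gauss \<epsilon> \<omega> P\<bar> < \<delta>) \<omega>"
proof (cases "P \<in> Apoly \<epsilon>")
  case False
  then show ?thesis using d by (simp add: evalpt_def gauss_def)
next
  case P: True
  define g where "g = gauss \<epsilon> \<omega> P"
  define c where "c = (\<rho>/3) ^ degree P"
  have c0: "0 < c" unfolding c_def using r by simp
  have t1: "((\<lambda>n. N1 (cp P n) powr \<epsilon> n) \<longlongrightarrow> g) \<omega>"
    unfolding g_def gauss_eq[OF eps U na P] by (rule GN_tends[OF eps U P])
  have t2: "((\<lambda>n. c powr \<epsilon> n * N1 (cp P n) powr \<epsilon> n) \<longlongrightarrow> 1 * g) \<omega>"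
    by (intro tendsto_mult nonarch_const[OF eps U na c0] t1)
  have e1: "eventually (\<lambda>n. N1 (cp P n) powr \<epsilon> n < g + \<delta>) \<omega>"
    using order_tendstoD(2)[OF t1] d by simp
  have e2: "eventually (\<lambda>n. g - \<delta> < c powr \<epsilon> n * N1 (cp P n) powr \<epsilon> n) \<omega>"
    using order_tendstoD(1)[OF t2] d by simp
  show ?thesis using e1 e2
  proof eventually_elim
    case (elim n)
    show ?case
    proof (intro allI impI)
      fix t assume t: "t \<notin> Bset \<rho> P n"
      let ?v = "cmod (poly (cp P n) (cis t))"
      have lo: "c * N1 (cp P n) \<le> ?v" using t P unfolding c_def by (simp add: Bset_def not_less)
      have hi: "?v \<le> N1 (cp P n)" by (rule poly_le_N1) simp
      have "?v powr \<epsilon> n \<le> N1 (cp P n) powr \<epsilon> n" using hi eposF[of n] by (intro powr_mono2) auto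
      moreover have "c powr \<epsilon> n * N1 (cp P n) powr \<epsilon> n \<le> ?v powr \<epsilon> n"
      proof -
        have "c powr \<epsilon> n * N1 (cp P n) powr \<epsilon> n = (c * N1 (cp P n)) powr \<epsilon> n"
          using c0 N1_nonneg by (simp add: powr_mult)
        also have "\<dots> \<le> ?v powr \<epsilon> n" using lo c0 N1_nonneg eposF[of n] by (intro powr_mono2) auto
        finally show ?thesis .
      qed
      moreover have "evalpt \<epsilon> (principal {n}) (\<lambda>_. cis t) P = ?v powr \<epsilon> n"
        using evalpt_principal[OF eps P] by (simp add: Gn_def[OF eps])
      ultimately show "\<bar>evalpt \<epsilon> (principal {n}) (\<lambda>_. cis t) P - gauss \<epsilon> \<omega> P\<bar> < \<delta>"
        using elim unfolding g_def by auto
    qed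
  qed
qed

theorem nonarch_conv:
  fixes h :: "seminorm \<Rightarrow> real"
  assumes U: "ultrafilter_on_nat \<omega>" and na: "\<not> archimedean_at \<epsilon> \<omega>" and h: "continuous_on (Disc \<epsilon>) h"
  shows "((\<lambda>n. \<integral>t. h (evalpt \<epsilon> (principal {n}) (\<lambda>_. cis t)) \<partial>Um) \<longlongrightarrow> h (gauss \<epsilon> \<omega>)) \<omega>"
proof (rule tendstoI)
  fix \<eta> :: real assume eta: "0 < \<eta>"
  let ?g = "gauss \<epsilon> \<omega>"
  have CD: "Cset \<epsilon> \<subseteq> Disc \<epsilon>" unfolding Cset_def by auto
  have "compact (h ` Cset \<epsilon>)" by (intro compact_continuous_image compact_Cset continuous_on_subset[OF h CD])
  then have "bounded (h ` Cset \<epsilon>)" by (rule compact_imp_bounded)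
  then obtain M0 where M0: "\<forall>y\<in>h ` Cset \<epsilon>. norm y \<le> M0" unfolding bounded_iff by blast
  define M where "M = max 0 M0"
  have M: "0 \<le> M" "\<And>x. x \<in> Cset \<epsilon> \<Longrightarrow> \<bar>h x\<bar> \<le> M" using M0 unfolding M_def by force+
  have gC: "?g \<in> Cset \<epsilon>" by (rule gauss_Cset[OF eps U na])
  have gD: "?g \<in> Disc \<epsilon>" using gC CD by auto
  obtain F \<delta> where Fd: "finite F" "0 < \<delta>"
    "\<forall>k\<in>{?g}. \<forall>y\<in>Disc \<epsilon>. (\<forall>i\<in>F. \<bar>y i - k i\<bar> < \<delta>) \<longrightarrow> \<bar>h y - h k\<bar> < \<eta>/2"
    using uc_compact[of "{?g}" "Disc \<epsilon>" h "\<eta>/2"] gD h eta by auto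
  define m where "m = card F"
  define \<kappa> where "\<kappa> = \<eta> / (4 * (M + 1) * (real m + 1))"
  have k0: "0 < \<kappa>" unfolding \<kappa>_def using eta M by simp
  define \<rho> where "\<rho> P = min 1 (\<kappa> / (16 * (real (degree P) + 1)))" for P :: "seq poly"
  have r0: "0 < \<rho> P" "\<rho> P \<le> 1" for P unfolding \<rho>_def using k0 by auto
  have rk: "16 * real (degree P) * \<rho> P \<le> \<kappa>" for P
  proof -
    have "16 * real (degree P) * \<rho> P \<le> 16 * (real (degree P) + 1) * (\<kappa> / (16 * (real (degree P) + 1)))"
      unfolding \<rho>_def using k0 by (intro mult_mono) auto
    also have "\<dots> = \<kappa>" by simp
    finally show ?thesis .
  qed
  have ev: "eventually (\<lambda>n. \<forall>P\<in>F. \<forall>t. t \<notin> Bset (\<rho> P) P n \<longrightarrow>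
     \<bar>evalpt \<epsilon> (principal {n}) (\<lambda>_. cis t) P - ?g P\<bar> < \<delta>) \<omega>"
    using Fd(1) by (intro eventually_ball_finite ballI nonarch_good[OF U na r0 Fd(2)])
  show "eventually (\<lambda>n. dist (\<integral>t. h (evalpt \<epsilon> (principal {n}) (\<lambda>_. cis t)) \<partial>Um) (h ?g) < \<eta>) \<omega>"
    using ev
  proof eventually_elim
    case (elim n)
    have Un: "ultrafilter_on_nat (principal {n})" by (rule ultra_principal)
    define B where "B = (\<Union>P\<in>F. Bset (\<rho> P) P n)"
    have Bs: "B \<in> sets Um" unfolding B_def using Fd(1) Bset_sets by auto
    have mB: "measure Um B \<le> real m * \<kappa>"
    proof -
      have "measure Um B \<le> (\<Sum>P\<in>F. measure Um (Bset (\<rho> P) P n))"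
        unfolding B_def using Bset_sets by (intro measure_UNION_le Fd(1)) auto
      also have "\<dots> \<le> (\<Sum>P\<in>F. \<kappa>)"
        by (intro sum_mono) (rule order.trans[OF Bset_measure[OF r0] rk])
      also have "\<dots> = real m * \<kappa>" by (simp add: m_def)
      finally show ?thesis .
    qed
    have bd: "\<bar>h (evalpt \<epsilon> (principal {n}) (\<lambda>_. cis t)) - h ?g\<bar> \<le> \<eta>/2 + (2*M) * indicator B t" for t
    proof (cases "t \<in> B")
      case True
      have "evalpt \<epsilon> (principal {n}) (\<lambda>_. cis t) \<in> Cset \<epsilon>" by (rule evalpt_Cset[OF eps Un]) simp
      then have "\<bar>h (evalpt \<epsilon> (principal {n}) (\<lambda>_. cis t))\<bar> \<le> M" by (rule M(2))
      moreover have "\<bar>h ?g\<bar> \<le> M" using M(2) gC by blast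
      ultimately show ?thesis using True eta by simp
    next
      case False
      have y: "evalpt \<epsilon> (principal {n}) (\<lambda>_. cis t) \<in> Disc \<epsilon>" by (rule evalpt_sphere_Disc[OF eps Un]) simp
      have "\<forall>P\<in>F. \<bar>evalpt \<epsilon> (principal {n}) (\<lambda>_. cis t) P - ?g P\<bar> < \<delta>"
        using elim False unfolding B_def by blast
      then have "\<bar>h (evalpt \<epsilon> (principal {n}) (\<lambda>_. cis t)) - h ?g\<bar> < \<eta>/2" using Fd(3) y by blast
      then show ?thesis using False by simp
    qed
    have "\<bar>(\<integral>t. h (evalpt \<epsilon> (principal {n}) (\<lambda>_. cis t)) \<partial>Um) - h ?g\<bar> \<le> \<eta>/2 + (2*M) * measure Um B"
      using int_Um_bound[OF int_evalpt[OF eps Un principal_arch[OF eps] h] Bs _ bd] M(1) by simp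
    also have "\<dots> \<le> \<eta>/2 + (2*M) * (real m * \<kappa>)" using mB M(1) by (intro add_left_mono mult_left_mono) auto
    also have "\<dots> < \<eta>"
    proof -
      have "(2*M) * (real m * \<kappa>) = \<eta> * ((2*M) * real m) / (4 * (M + 1) * (real m + 1))"
        unfolding \<kappa>_def by simp
      also have "\<dots> < \<eta> / 2"
      proof -
        define X where "X = M * real m"
        define Q where "Q = (M + 1) * (real m + 1)"
        have Q0: "0 < Q" unfolding Q_def using M(1) by simp
        have XQ: "X < Q" unfolding X_def Q_def using M(1) by (simp add: algebra_simps)
        have m1: "M + 1 \<noteq> 0" "real m + 1 \<noteq> 0" using M(1) by auto
        have a: "\<eta> * ((2*M) * real m) = 2 * (\<eta> * X)" by (simp add: X_def)
        have b: "4 * (M + 1) * (real m + 1) = 2 * (2 * Q)" by (simp add: Q_def)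
        have e1: "\<eta> * ((2*M) * real m) / (4 * (M + 1) * (real m + 1)) = (\<eta> * X) / (2 * Q)"
          unfolding a b by simp
        have "(\<eta> * X) / (2 * Q) < (\<eta> * Q) / (2 * Q)"
          using XQ eta Q0 by (intro divide_strict_right_mono mult_strict_left_mono) auto
        also have "\<dots> = \<eta> / 2" using Q0 by simp
        finally show ?thesis unfolding e1 .
      qed
      finally show ?thesis by simp
    qed
    finally show ?case by (simp add: dist_real_def)
  qed
qed

end


lemma topspace_betaN_top: "topspace betaN_top = betaN"
proof -
  have "openin betaN_top betaN" unfolding openin_betaN_top
    by (auto intro!: exI[of _ UNIV])
  then have "betaN \<subseteq> topspace betaN_top" by (rule openin_subset)
  moreover have "topspace betaN_top \<subseteq> betaN" unfolding topspace_def using openin_betaN_top by blast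
  ultimately show ?thesis by blast
qed

lemma betaN_ultra: "\<omega> \<in> betaN \<longleftrightarrow> ultrafilter_on_nat \<omega>"
  unfolding betaN_def by simp

context
  fixes \<epsilon> :: "nat \<Rightarrow> real"
  assumes eps: "\<forall>n. 0 < \<epsilon> n \<and> \<epsilon> n \<le> 1"
begin

lemma Phi_arch:
  assumes U: "ultrafilter_on_nat \<nu>" and ar: "archimedean_at \<epsilon> \<nu>"
    and f: "continuous_map (P1top \<epsilon>) euclideanreal f"
  shows "(\<integral>p. f p \<partial>mu_can_fibre \<epsilon> \<nu>) = (\<integral>t. f (chart0 (evalpt \<epsilon> \<nu> (\<lambda>_. cis t))) \<partial>Um)"
proof -
  have h: "continuous_on (Disc \<epsilon>) (\<lambda>x. f (chart0 x))" by (rule cont_chart0[OF f])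
  have gm: "(\<lambda>t. chart0 (evalpt \<epsilon> \<nu> (\<lambda>_. cis t))) \<in> Um \<rightarrow>\<^sub>M borel_on (P1top \<epsilon>)"
    by (rule g_meas[OF comp_cont(1)[OF eps U ar h]]) (rule evalpt_sphere_Disc[OF eps U], simp)
  have "mu_can_fibre \<epsilon> \<nu> = distr Um (borel_on (P1top \<epsilon>)) (\<lambda>t. chart0 (evalpt \<epsilon> \<nu> (\<lambda>_. cis t)))"
    unfolding mu_can_fibre_def Um_def using ar by simp
  then show ?thesis using integral_distr[OF gm f_meas[OF f]] by simp
qed

lemma Phi_nonarch:
  assumes U: "ultrafilter_on_nat \<nu>" and na: "\<not> archimedean_at \<epsilon> \<nu>"
    and f: "continuous_map (P1top \<epsilon>) euclideanreal f"
  shows "(\<integral>p. f p \<partial>mu_can_fibre \<epsilon> \<nu>) = f (chart0 (gauss \<epsilon> \<nu>))"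
proof -
  have "chart0 (gauss \<epsilon> \<nu>) \<in> space (borel_on (P1top \<epsilon>))"
    unfolding space_borel_on topspace_P1top by (rule chart0_P1[OF gauss_Disc[OF eps U na]])
  then show ?thesis unfolding mu_can_fibre_def using na integral_return[OF _ f_meas[OF f]] by simp
qed

lemma Phi_lim:
  assumes U: "ultrafilter_on_nat \<nu>" and f: "continuous_map (P1top \<epsilon>) euclideanreal f"
  shows "((\<lambda>n. \<integral>p. f p \<partial>mu_can_fibre \<epsilon> (principal {n})) \<longlongrightarrow> (\<integral>p. f p \<partial>mu_can_fibre \<epsilon> \<nu>)) \<nu>"
proof -
  have h: "continuous_on (Disc \<epsilon>) (\<lambda>x. f (chart0 x))" by (rule cont_chart0[OF f])
  have pn: "(\<integral>p. f p \<partial>mu_can_fibre \<epsilon> (principal {n})) =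
      (\<integral>t. f (chart0 (evalpt \<epsilon> (principal {n}) (\<lambda>_. cis t))) \<partial>Um)" for n
    by (rule Phi_arch[OF ultra_principal principal_arch[OF eps] f])
  show ?thesis
  proof (cases "archimedean_at \<epsilon> \<nu>")
    case True
    show ?thesis unfolding pn Phi_arch[OF U True f] by (rule arch_conv[OF eps U True h])
  next
    case False
    show ?thesis unfolding pn Phi_nonarch[OF U False f] by (rule nonarch_conv[OF eps U False h])
  qed
qed

lemma Phi_open:
  assumes f: "continuous_map (P1top \<epsilon>) euclideanreal f" and V: "open V"
  shows "openin betaN_top {\<omega> \<in> betaN. (\<integral>p. f p \<partial>mu_can_fibre \<epsilon> \<omega>) \<in> V}"
  unfolding openin_betaN_top
proof (intro conjI ballI)
  show "{\<omega> \<in> betaN. (\<integral>p. f p \<partial>mu_can_fibre \<epsilon> \<omega>) \<in> V} \<subseteq> betaN" by auto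
next
  let ?F = "\<lambda>\<omega>. \<integral>p. f p \<partial>mu_can_fibre \<epsilon> \<omega>"
  fix \<omega> assume w: "\<omega> \<in> {\<omega> \<in> betaN. ?F \<omega> \<in> V}"
  then have U: "ultrafilter_on_nat \<omega>" and FV: "?F \<omega> \<in> V" by (auto simp: betaN_ultra)
  obtain r where r: "0 < r" "ball (?F \<omega>) r \<subseteq> V" using V FV open_contains_ball by blast
  define A where "A = {n. dist (?F (principal {n})) (?F \<omega>) < r/2}"
  have "eventually (\<lambda>n. dist (?F (principal {n})) (?F \<omega>) < r/2) \<omega>"
    using tendstoD[OF Phi_lim[OF U f], of "r/2"] r by simp
  then have evA: "eventually (\<lambda>n. n \<in> A) \<omega>" unfolding A_def by simp
  have "{\<nu> \<in> betaN. eventually (\<lambda>n. n \<in> A) \<nu>} \<subseteq> {\<omega> \<in> betaN. ?F \<omega> \<in> V}"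
  proof
    fix \<nu> assume nu: "\<nu> \<in> {\<nu> \<in> betaN. eventually (\<lambda>n. n \<in> A) \<nu>}"
    then have Un: "ultrafilter_on_nat \<nu>" and evn: "eventually (\<lambda>n. n \<in> A) \<nu>" by (auto simp: betaN_ultra)
    have "((\<lambda>n. dist (?F (principal {n})) (?F \<omega>)) \<longlongrightarrow> dist (?F \<nu>) (?F \<omega>)) \<nu>"
      by (intro tendsto_dist Phi_lim[OF Un f] tendsto_const)
    moreover have "eventually (\<lambda>n. dist (?F (principal {n})) (?F \<omega>) \<le> r/2) \<nu>"
      using evn by eventually_elim (simp add: A_def)
    ultimately have "dist (?F \<nu>) (?F \<omega>) \<le> r/2" using lim_le_ultra[OF Un _ tendsto_const] by blast
    then have "?F \<nu> \<in> ball (?F \<omega>) r" using r by (simp add: dist_commute)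
    then show "\<nu> \<in> {\<omega> \<in> betaN. ?F \<omega> \<in> V}" using r nu by auto
  qed
  then show "\<exists>A. eventually (\<lambda>n. n \<in> A) \<omega> \<and> {\<nu> \<in> betaN. eventually (\<lambda>n. n \<in> A) \<nu>} \<subseteq> {\<omega> \<in> betaN. ?F \<omega> \<in> V}"
    using evA by blast
qed

end

theorem mainTheorem17:
  fixes \<epsilon> :: "nat \<Rightarrow> real"
  assumes "\<forall>n. 0 < \<epsilon> n \<and> \<epsilon> n \<le> 1"
  shows "continuous_map betaN_top (weak_star_top \<epsilon>) (mu_can_fibre \<epsilon>)"
proof -
  note eps = assms
  define S where "S = {{\<mu>. (\<integral>p. f p \<partial>\<mu>) \<in> U} | f U. continuous_map (P1top \<epsilon>) euclideanreal f \<and> open U}"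
  have ws: "weak_star_top \<epsilon> = topology_generated_by S" unfolding weak_star_top_def S_def by simp
  have UNIV_S: "UNIV \<in> S"
  proof -
    have "UNIV = {\<mu>::P1point measure. (\<integral>p. (\<lambda>_. 0::real) p \<partial>\<mu>) \<in> UNIV}" by simp
    moreover have "continuous_map (P1top \<epsilon>) euclideanreal (\<lambda>_. 0::real)" by simp
    ultimately show ?thesis unfolding S_def by blast
  qed
  have top: "topspace (weak_star_top \<epsilon>) = UNIV" unfolding ws using UNIV_S by auto
  show ?thesis unfolding continuous_map_def
  proof (intro conjI allI impI)
    show "mu_can_fibre \<epsilon> \<in> topspace betaN_top \<rightarrow> topspace (weak_star_top \<epsilon>)" using top by simp
  next
    fix W assume "openin (weak_star_top \<epsilon>) W"
    then have "generate_topology_on S W" unfolding ws by (rule openin_topology_generated_by)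
    then show "openin betaN_top {x \<in> topspace betaN_top. mu_can_fibre \<epsilon> x \<in> W}"
    proof (induction rule: generate_topology_on.induct)
      case Empty then show ?case by simp
    next
      case (Int a b)
      have "{x \<in> topspace betaN_top. mu_can_fibre \<epsilon> x \<in> a \<inter> b} =
          {x \<in> topspace betaN_top. mu_can_fibre \<epsilon> x \<in> a} \<inter> {x \<in> topspace betaN_top. mu_can_fibre \<epsilon> x \<in> b}"
        by auto
      then show ?case using Int by (simp add: openin_Int)
    next
      case (UN K)
      have "{x \<in> topspace betaN_top. mu_can_fibre \<epsilon> x \<in> \<Union>K} =
          (\<Union>k\<in>K. {x \<in> topspace betaN_top. mu_can_fibre \<epsilon> x \<in> k})" by auto
      then show ?case using UN by (auto intro!: openin_Union)
    next
      case (Basis s)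
      then obtain f V where fV: "s = {\<mu>. (\<integral>p. f p \<partial>\<mu>) \<in> V}" "continuous_map (P1top \<epsilon>) euclideanreal f" "open V"
        unfolding S_def by blast
      have "{x \<in> topspace betaN_top. mu_can_fibre \<epsilon> x \<in> s} =
          {\<omega> \<in> betaN. (\<integral>p. f p \<partial>mu_can_fibre \<epsilon> \<omega>) \<in> V}"
        unfolding fV(1) topspace_betaN_top by simp
      then show ?case using Phi_open[OF eps fV(2,3)] by simp
    qed
  qed
qed


end
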